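(* Consider the stochastic $K$-armed bandit with losses supported in $[0,1]$ and run the Regularized-EXP3 algorithm described in the context with mirror map $\phi_\alpha$, $\alpha\in[0,1]$, and parameters $\eta,\lambda>0$ and $\varepsilon>0$ with $K\varepsilon\le1$. Then for every $y\in\Delta_\varepsilon$, $$\mathbb E\left[f_{\lambda,\varepsilon}(\overline x_T)-f_{\lambda,\varepsilon}(y)\right]\le\mathbb E\left[\frac{D_{\phi_\alpha}(y,x_1)}{\eta T}+\frac\eta T\sum_{t=1}^T\|\widehat\ell_t\|^2_{x_t,\alpha}+\frac{\eta\lambda^2}{T}\sum_{t=1}^T\|\nabla R_\varepsilon(x_t)\|^2_{x_t,\alpha}\right],$$ where $\|v\|^2_{x_t,\alpha}=\sum_{i=1}^Kv_i^2x_{t,i}^{2-\alpha}$ and $\overline x_T=\frac1T\sum_{t=1}^Tx_t$.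
   Context: Stochastic $K$-armed bandit: arm $a$ has loss distribution $\mathcal P_a$ on $[0,1]$ with mean $\mu_a$; at round $t$ the learner picks $A_t$ and observes $\ell_t\sim\mathcal P_{A_t}$. $f_{\lambda,\varepsilon}(x)=\langle\mu,x\rangle+\lambda R_\varepsilon(x)$ with $R_\varepsilon(x)=-\sum_i\ln x_i+\frac1\varepsilon\sum_ix_i$. $\Delta_\varepsilon=\{x\in\mathbb R^K: x_j\ge\varepsilon\ \forall j,\ \sum_jx_j=1\}$. Mirror maps on $\mathbb R^K_{>0}$: $\phi_\alpha(x)=-\sum_i\frac{x_i^\alpha-\alpha x_i-(1-\alpha)}{\alpha(1-\alpha)}$ for $0<\alpha<1$, $\phi_0(x)=-\sum_i(\log x_i-x_i+1)$, $\phi_1(x)=\sum_i(x_i\log x_i-x_i+1)$. $D_\phi(x,y)=\phi(x)-\phi(y)-\langle\nabla\phi(y),x-y\rangle$. Regularized-EXP3: $z_1=(1/K,\dots,1/K)$; for $t=1,\dots,T$: $x_t=\arg\min_{x\in\Delta_\varepsilon}D_\phi(x,z_t)$ (so $x_1=z_1$); draw $A_t$ with $\mathbb P(A_t=j\mid\text{past})=x_{t,j}$, observe $\ell_t$; $\widehat\ell_{t,j}=\mathbb I\{A_t=j\}\ell_t/x_{t,j}$; $\widetilde\ell_t=\widehat\ell_t+\lambda\nabla R_\varepsilon(x_t)$; $z_{t+1}=\arg\min_x\{\eta\langle\widetilde\ell_t,x\rangle+D_\phi(x,x_t)\}$. *)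

theory Defs
  imports "HOL-Probability.Probability"
begin

text \<open>Arms are the elements of a finite type 'k (so K = CARD('k)); vectors in R^K are
  functions 'k \<Rightarrow> real.  A history is the list of (arm played, loss observed) pairs.\<close>

definition inner_vec :: "('k::finite \<Rightarrow> real) \<Rightarrow> ('k \<Rightarrow> real) \<Rightarrow> real" where
  "inner_vec u v = (\<Sum>i\<in>UNIV. u i * v i)"

definition mirror_phi :: "real \<Rightarrow> ('k::finite \<Rightarrow> real) \<Rightarrow> real" where
  "mirror_phi \<alpha> x =
     (if \<alpha> = 0 then - (\<Sum>i\<in>UNIV. ln (x i) - x i + 1)
      else if \<alpha> = 1 then (\<Sum>i\<in>UNIV. x i * ln (x i) - x i + 1)
      else - (\<Sum>i\<in>UNIV. (x i powr \<alpha> - \<alpha> * x i - (1 - \<alpha>)) / (\<alpha> * (1 - \<alpha>))))"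

definition grad_phi :: "real \<Rightarrow> ('k::finite \<Rightarrow> real) \<Rightarrow> ('k \<Rightarrow> real)" where
  "grad_phi \<alpha> x = (\<lambda>i.
     if \<alpha> = 0 then 1 - 1 / x i
     else if \<alpha> = 1 then ln (x i)
     else - (x i powr (\<alpha> - 1) - 1) / (1 - \<alpha>))"

definition bregman :: "real \<Rightarrow> ('k::finite \<Rightarrow> real) \<Rightarrow> ('k \<Rightarrow> real) \<Rightarrow> real" where
  "bregman \<alpha> x y = mirror_phi \<alpha> x - mirror_phi \<alpha> y - inner_vec (grad_phi \<alpha> y) (\<lambda>i. x i - y i)"

definition pos_orthant :: "('k::finite \<Rightarrow> real) set" where
  "pos_orthant = {x. \<forall>i. 0 < x i}"

definition trunc_simplex :: "real \<Rightarrow> ('k::finite \<Rightarrow> real) set" where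
  "trunc_simplex \<epsilon> = {x. (\<forall>j. \<epsilon> \<le> x j) \<and> (\<Sum>j\<in>UNIV. x j) = 1}"

definition R_eps :: "real \<Rightarrow> ('k::finite \<Rightarrow> real) \<Rightarrow> real" where
  "R_eps \<epsilon> x = - (\<Sum>i\<in>UNIV. ln (x i)) + (1 / \<epsilon>) * (\<Sum>i\<in>UNIV. x i)"

definition grad_R_eps :: "real \<Rightarrow> ('k::finite \<Rightarrow> real) \<Rightarrow> ('k \<Rightarrow> real)" where
  "grad_R_eps \<epsilon> x = (\<lambda>i. - 1 / x i + 1 / \<epsilon>)"

definition f_obj :: "('k::finite \<Rightarrow> real) \<Rightarrow> real \<Rightarrow> real \<Rightarrow> ('k \<Rightarrow> real) \<Rightarrow> real" where
  "f_obj \<mu> lam \<epsilon> x = inner_vec \<mu> x + lam * R_eps \<epsilon> x"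

definition local_norm_sq :: "real \<Rightarrow> ('k::finite \<Rightarrow> real) \<Rightarrow> ('k \<Rightarrow> real) \<Rightarrow> real" where
  "local_norm_sq \<alpha> x v = (\<Sum>i\<in>UNIV. (v i)\<^sup>2 * x i powr (2 - \<alpha>))"

definition uniform_vec :: "'k::finite \<Rightarrow> real" where
  "uniform_vec = (\<lambda>_. 1 / real CARD('k))"

definition proj_step :: "real \<Rightarrow> real \<Rightarrow> ('k::finite \<Rightarrow> real) \<Rightarrow> ('k \<Rightarrow> real)" where
  "proj_step \<alpha> \<epsilon> z = arg_min_on (\<lambda>x. bregman \<alpha> x z) (trunc_simplex \<epsilon>)"

definition loss_est :: "('k::finite \<Rightarrow> real) \<Rightarrow> 'k \<Rightarrow> real \<Rightarrow> ('k \<Rightarrow> real)" where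
  "loss_est x a l = (\<lambda>j. if j = a then l / x j else 0)"

definition md_step :: "real \<Rightarrow> real \<Rightarrow> real \<Rightarrow> real \<Rightarrow> ('k::finite \<Rightarrow> real) \<Rightarrow> 'k \<Rightarrow> real \<Rightarrow> ('k \<Rightarrow> real)" where
  "md_step \<alpha> \<eta> lam \<epsilon> z a l =
     (let x = proj_step \<alpha> \<epsilon> z;
          lt = (\<lambda>j. loss_est x a l j + lam * grad_R_eps \<epsilon> x j)
      in arg_min_on (\<lambda>w. \<eta> * inner_vec lt w + bregman \<alpha> w x) pos_orthant)"

text \<open>z_t after the history h (of length t-1), and x_t = projection of z_t.\<close>
definition z_of :: "real \<Rightarrow> real \<Rightarrow> real \<Rightarrow> real \<Rightarrow> ('k::finite \<times> real) list \<Rightarrow> ('k \<Rightarrow> real)" where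
  "z_of \<alpha> \<eta> lam \<epsilon> h = foldl (\<lambda>z (a, l). md_step \<alpha> \<eta> lam \<epsilon> z a l) uniform_vec h"

definition x_of :: "real \<Rightarrow> real \<Rightarrow> real \<Rightarrow> real \<Rightarrow> ('k::finite \<times> real) list \<Rightarrow> ('k \<Rightarrow> real)" where
  "x_of \<alpha> \<eta> lam \<epsilon> h = proj_step \<alpha> \<epsilon> (z_of \<alpha> \<eta> lam \<epsilon> h)"

text \<open>Expectation of a function g of the history after n further rounds, starting from the
  history h, when at each round the arm is drawn from the policy pol(history) and the loss
  from P(arm) (iterated integral = law of the interaction process).\<close>
fun hist_exp :: "('k::finite \<Rightarrow> real measure) \<Rightarrow> (('k \<times> real) list \<Rightarrow> 'k \<Rightarrow> real)
                   \<Rightarrow> nat \<Rightarrow> (('k \<times> real) list \<Rightarrow> real) \<Rightarrow> ('k \<times> real) list \<Rightarrow> real" where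
  "hist_exp P pol 0 g h = g h"
| "hist_exp P pol (Suc n) g h =
     (\<Sum>j\<in>UNIV. pol h j * (\<integral>l. hist_exp P pol n g (h @ [(j, l)]) \<partial>(P j)))"

text \<open>Quantities along a full history h of length T (round t = 1..T corresponds to index t-1).\<close>
definition x_round :: "real \<Rightarrow> real \<Rightarrow> real \<Rightarrow> real \<Rightarrow> ('k::finite \<times> real) list \<Rightarrow> nat \<Rightarrow> ('k \<Rightarrow> real)" where
  "x_round \<alpha> \<eta> lam \<epsilon> h t = x_of \<alpha> \<eta> lam \<epsilon> (take t h)"

definition lhat_round :: "real \<Rightarrow> real \<Rightarrow> real \<Rightarrow> real \<Rightarrow> ('k::finite \<times> real) list \<Rightarrow> nat \<Rightarrow> ('k \<Rightarrow> real)" where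
  "lhat_round \<alpha> \<eta> lam \<epsilon> h t = loss_est (x_round \<alpha> \<eta> lam \<epsilon> h t) (fst (h ! t)) (snd (h ! t))"

end

theory Submission
  imports Defs
begin

definition psi :: "real \<Rightarrow> real \<Rightarrow> real" where
  "psi \<alpha> t = (if \<alpha> = 0 then - (ln t - t + 1) else if \<alpha> = 1 then t * ln t - t + 1
      else - ((t powr \<alpha> - \<alpha> * t - (1 - \<alpha>)) / (\<alpha> * (1 - \<alpha>))))"

definition dpsi :: "real \<Rightarrow> real \<Rightarrow> real" where
  "dpsi \<alpha> t = (if \<alpha> = 0 then 1 - 1 / t else if \<alpha> = 1 then ln t
      else - (t powr (\<alpha> - 1) - 1) / (1 - \<alpha>))"

definition Ds :: "real \<Rightarrow> real \<Rightarrow> real \<Rightarrow> real" where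
  "Ds \<alpha> a b = psi \<alpha> a - psi \<alpha> b - dpsi \<alpha> b * (a - b)"

lemma psi_deriv:
  assumes "0 < t"
  shows "(psi \<alpha> has_real_derivative dpsi \<alpha> t) (at t)"
proof (cases "\<alpha> = 0")
  case True
  show ?thesis unfolding psi_def dpsi_def using assms True
    by (auto intro!: derivative_eq_intros simp: field_simps)
next
  case F0: False
  show ?thesis
  proof (cases "\<alpha> = 1")
    case True
    show ?thesis unfolding psi_def dpsi_def using assms True
      by (auto intro!: derivative_eq_intros simp: field_simps)
  next
    case False
    have d: "((\<lambda>t. t powr \<alpha>) has_real_derivative \<alpha> * t powr (\<alpha> - 1)) (at t)"
      by (rule has_real_derivative_powr) (use assms in simp)
    have "((\<lambda>t. - ((t powr \<alpha> - \<alpha> * t - (1 - \<alpha>)) / (\<alpha> * (1 - \<alpha>)))) has_real_derivative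
           - ((\<alpha> * t powr (\<alpha> - 1) - \<alpha> * 1 - 0) / (\<alpha> * (1 - \<alpha>)))) (at t)"
      by (intro DERIV_minus DERIV_cdivide DERIV_diff DERIV_cmult DERIV_ident DERIV_const d)
    moreover have "- ((\<alpha> * t powr (\<alpha> - 1) - \<alpha> * 1 - 0) / (\<alpha> * (1 - \<alpha>))) = - (t powr (\<alpha> - 1) - 1) / (1 - \<alpha>)"
    proof -
      have "1 - \<alpha> \<noteq> 0" using False by simp
      then show ?thesis using F0 by (simp add: field_simps)
    qed
    moreover have "psi \<alpha> = (\<lambda>t. - ((t powr \<alpha> - \<alpha> * t - (1 - \<alpha>)) / (\<alpha> * (1 - \<alpha>))))"
      using F0 False by (simp add: psi_def fun_eq_iff)
    moreover have "dpsi \<alpha> t = - (t powr (\<alpha> - 1) - 1) / (1 - \<alpha>)"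
      using F0 False by (simp add: dpsi_def)
    ultimately show ?thesis by simp
  qed
qed

lemma dpsi_deriv:
  assumes "0 < t"
  shows "(dpsi \<alpha> has_real_derivative t powr (\<alpha> - 2)) (at t)"
proof (cases "\<alpha> = 0")
  case True
  have "t powr (-2) = 1 / t^2" using assms by (simp add: powr_minus_divide powr_numeral)
  then show ?thesis unfolding dpsi_def using assms True
    by (auto intro!: derivative_eq_intros simp: field_simps power2_eq_square)
next
  case F0: False
  show ?thesis
  proof (cases "\<alpha> = 1")
    case True
    have "t powr (-1) = 1 / t" using assms by (simp add: powr_minus_divide)
    then show ?thesis unfolding dpsi_def using assms True
      by (auto intro!: derivative_eq_intros simp: field_simps)
  next
    case False
    have d: "((\<lambda>t. t powr (\<alpha> - 1)) has_real_derivative (\<alpha> - 1) * t powr (\<alpha> - 1 - 1)) (at t)"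
      by (rule has_real_derivative_powr) (use assms in simp)
    have "((\<lambda>t. - (t powr (\<alpha> - 1) - 1) / (1 - \<alpha>)) has_real_derivative
           - ((\<alpha> - 1) * t powr (\<alpha> - 1 - 1) - 0) / (1 - \<alpha>)) (at t)"
      by (intro DERIV_minus DERIV_cdivide DERIV_diff DERIV_const d)
    moreover have "- ((\<alpha> - 1) * t powr (\<alpha> - 1 - 1) - 0) / (1 - \<alpha>) = t powr (\<alpha> - 2)"
    proof -
      have "1 - \<alpha> \<noteq> 0" using False by simp
      then show ?thesis by (simp add: field_simps)
    qed
    moreover have "dpsi \<alpha> = (\<lambda>t. - (t powr (\<alpha> - 1) - 1) / (1 - \<alpha>))"
      using F0 False by (simp add: dpsi_def fun_eq_iff)
    ultimately show ?thesis by simp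
  qed
qed

lemma dpsi_S3':
  assumes "0 \<le> \<alpha>" "\<alpha> \<le> 1" "0 < b" "b \<le> a"
  shows "dpsi \<alpha> a - dpsi \<alpha> b \<ge> a powr (\<alpha> - 2) * (a - b)"
proof (cases "b = a")
  case True then show ?thesis by simp
next
  case False
  then have ba: "b < a" using assms by simp
  obtain z where z: "b < z" "z < a" "dpsi \<alpha> a - dpsi \<alpha> b = (a - b) * z powr (\<alpha> - 2)"
    using MVT2[OF ba, of "dpsi \<alpha>" "\<lambda>t. t powr (\<alpha> - 2)"] dpsi_deriv assms by force
  have "a powr (\<alpha> - 2) \<le> z powr (\<alpha> - 2)"
    by (rule powr_mono2') (use assms z in auto)
  then show ?thesis using z ba by (simp add: mult.commute mult_left_mono)
qed

lemma dpsi_strict: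
  assumes "0 \<le> \<alpha>" "\<alpha> \<le> 1" "0 < b" "b < a"
  shows "dpsi \<alpha> b < dpsi \<alpha> a"
proof -
  have "a powr (\<alpha> - 2) * (a - b) > 0" using assms by simp
  then show ?thesis using dpsi_S3'[of \<alpha> b a] assms by linarith
qed

lemma dpsi_mono:
  assumes "0 \<le> \<alpha>" "\<alpha> \<le> 1" "0 < b" "b \<le> a"
  shows "dpsi \<alpha> b \<le> dpsi \<alpha> a"
  using dpsi_strict[of \<alpha> b a] assms by (cases "b = a") auto

lemma dpsi_S3:
  assumes "0 \<le> \<alpha>" "\<alpha> \<le> 1" "0 < a" "a \<le> 1" "0 < b" "b \<le> 1"
  shows "(dpsi \<alpha> a - dpsi \<alpha> b) * (a - b) \<ge> (a - b)^2"
proof -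
  have gen: "(dpsi \<alpha> a - dpsi \<alpha> b) * (a - b) \<ge> (a - b)^2" if "0 < b" "b \<le> a" "a \<le> 1" for a b
  proof -
    have "1 \<le> a powr (\<alpha> - 2)"
      using powr_mono2'[of "\<alpha> - 2" a 1] that assms by simp
    then have "a powr (\<alpha> - 2) * (a - b) \<ge> (a - b)" using that mult_right_mono[of 1 "a powr (\<alpha> - 2)" "a - b"] by simp
    then have "dpsi \<alpha> a - dpsi \<alpha> b \<ge> a - b" using dpsi_S3'[of \<alpha> b a] that assms by linarith
    then show ?thesis using that by (simp add: power2_eq_square mult_right_mono)
  qed
  show ?thesis
  proof (cases "b \<le> a")
    case True then show ?thesis using gen assms by blast
  next
    case False
    then have "(dpsi \<alpha> b - dpsi \<alpha> a) * (b - a) \<ge> (b - a)^2" using gen assms by simp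
    then show ?thesis by (simp add: power2_commute algebra_simps)
  qed
qed


lemma Ds_pos:
  assumes "0 \<le> \<alpha>" "\<alpha> \<le> 1" "0 < a" "0 < b" "a \<noteq> b"
  shows "Ds \<alpha> a b > 0"
proof (cases "b < a")
  case True
  obtain z where z: "b < z" "z < a" "psi \<alpha> a - psi \<alpha> b = (a - b) * dpsi \<alpha> z"
    using MVT2[OF True, of "psi \<alpha>" "dpsi \<alpha>"] psi_deriv assms by force
  have "dpsi \<alpha> b < dpsi \<alpha> z" using dpsi_strict assms z by blast
  then have "(a - b) * dpsi \<alpha> b < (a - b) * dpsi \<alpha> z" using True by simp
  then show ?thesis unfolding Ds_def using z by (simp add: algebra_simps)
next
  case False
  then have ab: "a < b" using assms by simp
  obtain z where z: "a < z" "z < b" "psi \<alpha> b - psi \<alpha> a = (b - a) * dpsi \<alpha> z"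
    using MVT2[OF ab, of "psi \<alpha>" "dpsi \<alpha>"] psi_deriv assms by force
  have "dpsi \<alpha> z < dpsi \<alpha> b" using dpsi_strict assms z by auto
  then have "(b - a) * dpsi \<alpha> z < (b - a) * dpsi \<alpha> b" using ab by simp
  then show ?thesis unfolding Ds_def using z by (simp add: algebra_simps)
qed

lemma Ds_nonneg:
  assumes "0 \<le> \<alpha>" "\<alpha> \<le> 1" "0 < a" "0 < b"
  shows "Ds \<alpha> a b \<ge> 0"
  using Ds_pos[OF assms] by (cases "a = b") (auto simp: Ds_def)

lemma Ds_S5:
  assumes "0 \<le> \<alpha>" "\<alpha> \<le> 1" "0 < z" "z \<le> x"
  shows "Ds \<alpha> z x \<ge> (x - z)^2 * x powr (\<alpha> - 2) / 2"
proof (cases "z = x")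
  case True then show ?thesis by (simp add: Ds_def)
next
  case False
  then have zx: "z < x" using assms by simp
  define p where "p = x powr (\<alpha> - 2)"
  define k where "k = (\<lambda>s. psi \<alpha> s - psi \<alpha> x - dpsi \<alpha> x * (s - x) - (x - s)^2 * p / 2)"
  have der: "(k has_real_derivative (dpsi \<alpha> s - dpsi \<alpha> x + (x - s) * p)) (at s)" if "z \<le> s" for s
  proof -
    have ps: "(psi \<alpha> has_real_derivative dpsi \<alpha> s) (at s)" using psi_deriv that assms by simp
    have q: "((\<lambda>s. (x - s)^2 * p / 2) has_real_derivative (- ((x - s) * p))) (at s)"
    proof -
      have e: "(\<lambda>s. (x - s)^2 * p / 2) = (\<lambda>s. (x*x*p/2) - (x*p) * s + (p/2) * (s * s))"
        by (auto simp: fun_eq_iff power2_eq_square field_simps)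
      have sq: "((\<lambda>s. s * s) has_real_derivative 2 * s) (at s)"
        by (auto intro!: derivative_eq_intros)
      have "((\<lambda>s. (x*x*p/2) - (x*p) * s + (p/2) * (s * s)) has_real_derivative
              (0 - (x*p) * 1 + (p/2) * (2 * s))) (at s)"
        by (intro DERIV_add DERIV_diff DERIV_cmult DERIV_const DERIV_ident sq)
      then show ?thesis unfolding e by (simp add: algebra_simps)
    qed
    have "(k has_real_derivative (dpsi \<alpha> s - 0 - dpsi \<alpha> x * (1 - 0) - (- ((x - s) * p)))) (at s)"
      unfolding k_def
      by (intro DERIV_diff DERIV_cmult DERIV_const DERIV_ident ps q)
    then show ?thesis by (simp add: algebra_simps)
  qed
  obtain c where c: "z < c" "c < x" "k x - k z = (x - z) * (dpsi \<alpha> c - dpsi \<alpha> x + (x - c) * p)"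
    using MVT2[OF zx, of k] der by force
  have "dpsi \<alpha> x - dpsi \<alpha> c \<ge> p * (x - c)" unfolding p_def using dpsi_S3'[of \<alpha> c x] assms c by simp
  then have "(dpsi \<alpha> c - dpsi \<alpha> x + (x - c) * p) \<le> 0" by (simp add: algebra_simps)
  then have "k x - k z \<le> 0" using c zx by (simp add: mult_nonneg_nonpos)
  moreover have "k x = 0" unfolding k_def by simp
  ultimately have "k z \<ge> 0" by simp
  then show ?thesis unfolding k_def Ds_def p_def by simp
qed

lemma Ds_S4:
  assumes "0 \<le> \<alpha>" "\<alpha> \<le> 1" "0 < x" "0 < z" "0 \<le> u" "dpsi \<alpha> z = dpsi \<alpha> x - u"
  shows "Ds \<alpha> x z \<le> u^2 * x powr (2 - \<alpha>) / 2"
proof -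
  have zx: "z \<le> x"
  proof (rule ccontr)
    assume "\<not> z \<le> x"
    then have "dpsi \<alpha> x < dpsi \<alpha> z" using dpsi_strict[of \<alpha> x z] assms by simp
    then show False using assms by simp
  qed
  define p where "p = x powr (\<alpha> - 2)"
  have p: "p > 0" using assms p_def by simp
  have pinv: "x powr (2 - \<alpha>) = 1 / p" unfolding p_def using assms
    by (simp add: powr_minus_divide[symmetric] )
  have uu: "u = dpsi \<alpha> x - dpsi \<alpha> z" using assms by simp
  have sum: "Ds \<alpha> x z + Ds \<alpha> z x = u * (x - z)" unfolding Ds_def uu by (simp add: algebra_simps)
  have "Ds \<alpha> z x \<ge> (x - z)^2 * p / 2" using Ds_S5[OF assms(1,2,4) zx] p_def by simp
  then have "Ds \<alpha> x z \<le> u * (x - z) - (x - z)^2 * p / 2" using sum by linarith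
  also have "\<dots> \<le> u^2 / p / 2"
  proof -
    have "0 \<le> (u - p * (x - z))^2 / p / 2" using p by simp
    also have "(u - p * (x - z))^2 / p / 2 = u^2 / p / 2 - (u * (x - z) - (x - z)^2 * p / 2)"
      using p by (simp add: field_simps power2_eq_square)
    finally show ?thesis by simp
  qed
  finally show ?thesis using pinv by simp
qed

lemma mirror_phi_sum: "mirror_phi \<alpha> (x::'k::finite \<Rightarrow> real) = (\<Sum>i\<in>UNIV. psi \<alpha> (x i))"
proof (cases "\<alpha> = 0")
  case True
  have "mirror_phi \<alpha> x = -(\<Sum>i\<in>UNIV. ln (x i) - x i + 1)" using True by (simp add: mirror_phi_def)
  also have "\<dots> = (\<Sum>i\<in>UNIV. -(ln (x i) - x i + 1))" by (simp only: sum_negf)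
  also have "\<dots> = (\<Sum>i\<in>UNIV. psi \<alpha> (x i))" using True by (simp add: psi_def)
  finally show ?thesis .
next
  case F0: False
  show ?thesis
  proof (cases "\<alpha> = 1")
    case True then show ?thesis using F0 by (simp add: mirror_phi_def psi_def)
  next
    case False then show ?thesis using F0
      by (simp add: mirror_phi_def psi_def sum_negf sum_divide_distrib)
  qed
qed

lemma grad_phi_eq: "grad_phi \<alpha> x = (\<lambda>i. dpsi \<alpha> (x i))"
  by (simp add: grad_phi_def dpsi_def fun_eq_iff)

lemma bregman_sum: "bregman \<alpha> (x::'k::finite \<Rightarrow> real) y = (\<Sum>i\<in>UNIV. Ds \<alpha> (x i) (y i))"
  unfolding bregman_def inner_vec_def mirror_phi_sum grad_phi_eq Ds_def
  by (simp add: sum_subtractf)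

lemma bregman_three:
  "bregman \<alpha> (y::'k::finite \<Rightarrow> real) z = bregman \<alpha> y x + bregman \<alpha> x z
     + inner_vec (\<lambda>i. grad_phi \<alpha> x i - grad_phi \<alpha> z i) (\<lambda>i. y i - x i)"
  unfolding bregman_sum inner_vec_def grad_phi_eq
  by (simp add: sum.distrib[symmetric] Ds_def algebra_simps)

lemma bregman_nonneg:
  assumes "0 \<le> \<alpha>" "\<alpha> \<le> 1" "\<And>i. 0 < x i" "\<And>i. 0 < y i"
  shows "bregman \<alpha> (x::'k::finite \<Rightarrow> real) y \<ge> 0"
  unfolding bregman_sum by (rule sum_nonneg) (use Ds_nonneg assms in auto)

lemma bregman_pos:
  assumes "0 \<le> \<alpha>" "\<alpha> \<le> 1" "\<And>i. 0 < x i" "\<And>i. 0 < y i" "x \<noteq> y"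
  shows "bregman \<alpha> (x::'k::finite \<Rightarrow> real) y > 0"
proof -
  obtain i where "x i \<noteq> y i" using assms(5) by auto
  then have "Ds \<alpha> (x i) (y i) > 0" using Ds_pos assms by auto
  then show ?thesis unfolding bregman_sum
    by (intro sum_pos2[of UNIV i]) (use Ds_nonneg assms in auto)
qed

lemma isCont_dpsi: "0 < t \<Longrightarrow> isCont (dpsi \<alpha>) t"
  using DERIV_isCont[OF dpsi_deriv] by blast

lemma isCont_psi: "0 < t \<Longrightarrow> isCont (psi \<alpha>) t"
  using DERIV_isCont[OF psi_deriv] by blast

lemma simplex_bounds:
  assumes "x \<in> trunc_simplex \<epsilon>" "0 < \<epsilon>"
  shows "\<epsilon> \<le> x i" "x i \<le> 1" "0 < x i"
proof -
  show "\<epsilon> \<le> x i" using assms by (simp add: trunc_simplex_def)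
  then show "0 < x i" using assms by simp
  have nn: "0 \<le> x j" for j
  proof -
    have "\<epsilon> \<le> x j" using assms by (simp add: trunc_simplex_def)
    then show ?thesis using assms(2) by simp
  qed
  have "x i \<le> (\<Sum>j\<in>UNIV. x (j::'a::finite))"
    by (rule member_le_sum) (simp_all add: nn)
  then show "x i \<le> 1" using assms by (simp add: trunc_simplex_def)
qed

lemma uniform_in_simplex:
  assumes "0 < \<epsilon>" "real CARD('k::finite) * \<epsilon> \<le> 1"
  shows "(uniform_vec :: 'k \<Rightarrow> real) \<in> trunc_simplex \<epsilon>"
  using assms by (simp add: uniform_vec_def trunc_simplex_def field_simps)

definition Fobj :: "real \<Rightarrow> ('k::finite \<Rightarrow> real) \<Rightarrow> ('k \<Rightarrow> real) \<Rightarrow> real" where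
  "Fobj \<alpha> g x = mirror_phi \<alpha> x - inner_vec g x"

definition PiG :: "real \<Rightarrow> real \<Rightarrow> ('k::finite \<Rightarrow> real) \<Rightarrow> ('k \<Rightarrow> real)" where
  "PiG \<alpha> \<epsilon> g = arg_min_on (Fobj \<alpha> g) (trunc_simplex \<epsilon>)"

lemma exists_min:
  assumes "0 < \<epsilon>" "real CARD('k::finite) * \<epsilon> \<le> 1"
  shows "\<exists>x\<in>trunc_simplex \<epsilon>. \<forall>y\<in>trunc_simplex \<epsilon>. Fobj \<alpha> g x \<le> Fobj \<alpha> (g::'k \<Rightarrow> real) y"
proof -
  define V where "V = {v::real^'k. (\<forall>j. \<epsilon> \<le> v$j \<and> v$j \<le> 1) \<and> (\<Sum>j\<in>UNIV. v$j) = 1}"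
  define F where "F = (\<lambda>v::real^'k. (\<Sum>j\<in>UNIV. psi \<alpha> (v$j)) - (\<Sum>j\<in>UNIV. g j * v$j))"
  have V_eq: "V = (\<Inter>j. {v. \<epsilon> \<le> v$j}) \<inter> (\<Inter>j. {v. v$j \<le> 1}) \<inter> {v. (\<Sum>j\<in>UNIV. v$j) = 1}"
    unfolding V_def by auto
  have cvn: "continuous_on UNIV (\<lambda>v::real^'k. v$j)" for j
    by (intro linear_continuous_on bounded_linear_vec_nth)
  have c1: "closed {v::real^'k. \<epsilon> \<le> v$j}" for j
    by (rule closed_Collect_le[OF continuous_on_const cvn])
  have c2: "closed {v::real^'k. v$j \<le> 1}" for j
    by (rule closed_Collect_le[OF cvn continuous_on_const])
  have c3: "closed {v::real^'k. (\<Sum>j\<in>UNIV. v$j) = 1}"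
    by (rule closed_Collect_eq[OF continuous_on_sum continuous_on_const]) (rule cvn)
  have "closed V" unfolding V_eq
    by (intro closed_Int closed_INT ballI c1 c2 c3)
  moreover have "bounded V"
  proof -
    have "norm v \<le> real CARD('k)" if "v \<in> V" for v
    proof -
      have "norm v \<le> (\<Sum>i\<in>UNIV. \<bar>v$i\<bar>)" by (rule norm_le_l1_cart)
      also have "\<dots> \<le> (\<Sum>i\<in>(UNIV::'k set). 1)"
      proof (rule sum_mono)
        fix i
        have "\<epsilon> \<le> v$i" "v$i \<le> 1" using that by (auto simp: V_def)
        then show "\<bar>v$i\<bar> \<le> 1" using assms by simp
      qed
      finally show ?thesis by simp
    qed
    then show ?thesis unfolding bounded_iff by blast
  qed
  ultimately have "compact V" by (simp add: compact_eq_bounded_closed)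
  moreover have "V \<noteq> {}"
  proof -
    have u: "(uniform_vec::'k\<Rightarrow>real) \<in> trunc_simplex \<epsilon>" by (rule uniform_in_simplex[OF assms])
    have "(\<chi> j. (uniform_vec::'k\<Rightarrow>real) j) \<in> V"
      unfolding V_def using simplex_bounds[OF u assms(1)] u by (simp add: trunc_simplex_def)
    then show ?thesis by blast
  qed
  moreover have "continuous_on V F"
  proof -
    have "continuous_on V (\<lambda>v. psi \<alpha> (v$j))" for j
    proof (rule continuous_on_compose2[of "{0<..}" "psi \<alpha>" V "\<lambda>v. v$j"])
      show "continuous_on {0<..} (psi \<alpha>)"
        by (rule continuous_at_imp_continuous_on) (auto intro: isCont_psi)
      show "continuous_on V (\<lambda>v. v$j)" by (rule continuous_on_subset[OF cvn]) simp
      show "(\<lambda>v. v$j) ` V \<subseteq> {0<..}"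
      proof
        fix t assume "t \<in> (\<lambda>v. v$j) ` V"
        then obtain v where "v \<in> V" "t = v$j" by blast
        then have "\<epsilon> \<le> t" by (simp add: V_def)
        then show "t \<in> {0<..}" using assms by simp
      qed
    qed
    then show ?thesis unfolding F_def
      by (intro continuous_on_diff continuous_on_sum continuous_on_mult continuous_on_const
          continuous_on_subset[OF cvn] subset_UNIV)
  qed
  ultimately obtain v where v: "v \<in> V" "\<And>w. w \<in> V \<Longrightarrow> F v \<le> F w"
    using continuous_attains_inf[of V F] by blast
  define x where "x = (\<lambda>j. v$j)"
  have Fx: "Fobj \<alpha> g (\<lambda>j. w$j) = F w" for w
    unfolding Fobj_def F_def mirror_phi_sum inner_vec_def by simp
  have "x \<in> trunc_simplex \<epsilon>" using v by (auto simp: x_def V_def trunc_simplex_def)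
  moreover have "Fobj \<alpha> g x \<le> Fobj \<alpha> g y" if "y \<in> trunc_simplex \<epsilon>" for y
  proof -
    have "(\<chi> j. y j) \<in> V" using simplex_bounds[OF that assms(1)] that
      by (auto simp: V_def trunc_simplex_def)
    then have "F v \<le> F (\<chi> j. y j)" using v by blast
    then show ?thesis using Fx[of v] Fx[of "\<chi> j. y j"] by (simp add: x_def)
  qed
  ultimately show ?thesis by blast
qed

lemma PiG_props:
  assumes "0 < \<epsilon>" "real CARD('k::finite) * \<epsilon> \<le> 1"
  shows "PiG \<alpha> \<epsilon> g \<in> trunc_simplex \<epsilon>"
    and "\<And>y. y \<in> trunc_simplex \<epsilon> \<Longrightarrow> Fobj \<alpha> g (PiG \<alpha> \<epsilon> g) \<le> Fobj \<alpha> (g::'k \<Rightarrow> real) y"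
proof -
  have ex: "\<exists>x. is_arg_min (Fobj \<alpha> g) (\<lambda>x. x \<in> trunc_simplex \<epsilon>) x"
    using exists_min[OF assms, of \<alpha> g] by (auto simp: is_arg_min_def not_less)
  have "is_arg_min (Fobj \<alpha> g) (\<lambda>x. x \<in> trunc_simplex \<epsilon>) (PiG \<alpha> \<epsilon> g)"
    unfolding PiG_def arg_min_on_def arg_min_def using someI_ex[OF ex] .
  then show "PiG \<alpha> \<epsilon> g \<in> trunc_simplex \<epsilon>"
    and "\<And>y. y \<in> trunc_simplex \<epsilon> \<Longrightarrow> Fobj \<alpha> g (PiG \<alpha> \<epsilon> g) \<le> Fobj \<alpha> (g::'k \<Rightarrow> real) y"
    by (auto simp: is_arg_min_def not_less)
qed

lemma PiG_foc:
  assumes a: "0 \<le> \<alpha>" "\<alpha> \<le> 1" and e: "0 < \<epsilon>" "real CARD('k::finite) * \<epsilon> \<le> 1"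
    and y: "y \<in> trunc_simplex \<epsilon>"
  shows "(\<Sum>j\<in>UNIV. (dpsi \<alpha> (PiG \<alpha> \<epsilon> g j) - g j) * (y j - PiG \<alpha> \<epsilon> (g::'k \<Rightarrow> real) j)) \<ge> 0"
proof -
  define x where "x = PiG \<alpha> \<epsilon> g"
  define d where "d = (\<lambda>j. y j - x j)"
  have x_in: "x \<in> trunc_simplex \<epsilon>" unfolding x_def by (rule PiG_props(1)[OF e])
  have xmin: "Fobj \<alpha> g x \<le> Fobj \<alpha> g w" if "w \<in> trunc_simplex \<epsilon>" for w
    unfolding x_def using PiG_props(2)[OF e that] .
  have xpos: "0 < x j" for j using simplex_bounds[OF x_in e(1)] by simp
  have key: "0 \<le> (\<Sum>j\<in>UNIV. (dpsi \<alpha> (x j + t * d j) - g j) * d j)" if t: "0 < t" "t < 1" for t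
  proof -
    define xt where "xt = (\<lambda>j. x j + t * d j)"
    have xt_in: "xt \<in> trunc_simplex \<epsilon>"
      unfolding trunc_simplex_def
    proof (intro CollectI conjI allI)
      fix j
      have "xt j = (1 - t) * x j + t * y j" by (simp add: xt_def d_def algebra_simps)
      moreover have "(1 - t) * \<epsilon> \<le> (1 - t) * x j"
        using simplex_bounds(1)[OF x_in e(1)] t by (intro mult_left_mono) auto
      moreover have "t * \<epsilon> \<le> t * y j"
        using simplex_bounds(1)[OF y e(1)] t by (intro mult_left_mono) auto
      ultimately show "\<epsilon> \<le> xt j" by (simp add: algebra_simps)
    next
      have "(\<Sum>j\<in>UNIV. xt j) = (\<Sum>j\<in>UNIV. x j) + t * (\<Sum>j\<in>UNIV. d j)"
        by (simp add: xt_def sum.distrib sum_distrib_left)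
      moreover have "(\<Sum>j\<in>UNIV. d j) = 0"
        using x_in y by (simp add: d_def sum_subtractf trunc_simplex_def)
      ultimately show "(\<Sum>j\<in>UNIV. xt j) = 1" using x_in by (simp add: trunc_simplex_def)
    qed
    have xtpos: "0 < xt j" for j using simplex_bounds[OF xt_in e(1)] by simp
    have Fo: "Fobj \<alpha> g w = (\<Sum>j\<in>UNIV. psi \<alpha> (w j) - g j * w j)" for w
      by (simp add: Fobj_def mirror_phi_sum inner_vec_def sum_subtractf)
    have "Fobj \<alpha> g xt - Fobj \<alpha> g x = (\<Sum>j\<in>UNIV. (psi \<alpha> (xt j) - g j * xt j) - (psi \<alpha> (x j) - g j * x j))"
      unfolding Fo by (rule sum_subtractf[symmetric])
    also have "\<dots> = (\<Sum>j\<in>UNIV. (psi \<alpha> (xt j) - psi \<alpha> (x j)) - g j * (t * d j))"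
      by (rule sum.cong) (simp_all add: xt_def algebra_simps)
    also have "\<dots> \<le> (\<Sum>j\<in>UNIV. t * ((dpsi \<alpha> (xt j) - g j) * d j))"
    proof (rule sum_mono)
      fix j
      have h1: "psi \<alpha> (x j) - psi \<alpha> (xt j) - dpsi \<alpha> (xt j) * (x j - xt j) \<ge> 0"
        using Ds_nonneg[OF a xpos xtpos, of j j] unfolding Ds_def .
      have h2: "x j - xt j = -(t * d j)" by (simp add: xt_def)
      have "psi \<alpha> (xt j) - psi \<alpha> (x j) \<le> dpsi \<alpha> (xt j) * (t * d j)"
        using h1 unfolding h2 by simp
      then show "(psi \<alpha> (xt j) - psi \<alpha> (x j)) - g j * (t * d j) \<le> t * ((dpsi \<alpha> (xt j) - g j) * d j)"
        by (simp add: algebra_simps)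
    qed
    also have "\<dots> = t * (\<Sum>j\<in>UNIV. (dpsi \<alpha> (x j + t * d j) - g j) * d j)"
      by (simp add: sum_distrib_left xt_def)
    finally have "0 \<le> t * (\<Sum>j\<in>UNIV. (dpsi \<alpha> (x j + t * d j) - g j) * d j)"
      using xmin[OF xt_in] by simp
    then show ?thesis using t by (simp add: zero_le_mult_iff)
  qed
  define \<phi> where "\<phi> = (\<lambda>t. \<Sum>j\<in>UNIV. (dpsi \<alpha> (x j + t * d j) - g j) * d j)"
  have c: "isCont (\<lambda>t. dpsi \<alpha> (x j + t * d j)) 0" for j
  proof -
    have c1: "isCont (\<lambda>t::real. x j + t * d j) 0" by (intro continuous_intros)
    have c2: "isCont (dpsi \<alpha>) ((\<lambda>t::real. x j + t * d j) 0)" using isCont_dpsi[OF xpos[of j]] by simp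
    show ?thesis using isCont_o2[OF c1 c2] by simp
  qed
  have "isCont \<phi> 0" unfolding \<phi>_def
    by (intro continuous_sum continuous_mult continuous_diff continuous_const c)
  then have "(\<phi> \<longlongrightarrow> \<phi> 0) (at_right 0)"
    unfolding isCont_def by (rule tendsto_within_subset) simp
  moreover have "eventually (\<lambda>t. 0 \<le> \<phi> t) (at_right 0)"
    unfolding eventually_at_right_field \<phi>_def
    using key by (intro exI[of _ 1]) simp
  ultimately have "0 \<le> \<phi> 0"
    by (rule tendsto_lowerbound) simp
  then show ?thesis by (simp add: \<phi>_def x_def d_def)
qed

lemma PiG_lip:
  assumes a: "0 \<le> \<alpha>" "\<alpha> \<le> 1" and e: "0 < \<epsilon>" "real CARD('k::finite) * \<epsilon> \<le> 1"
  shows "(PiG \<alpha> \<epsilon> g1 i - PiG \<alpha> \<epsilon> g2 i)^2 \<le> (\<Sum>j\<in>UNIV. \<bar>g1 j - (g2::'k \<Rightarrow> real) j\<bar>)"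
proof -
  define x1 where "x1 = PiG \<alpha> \<epsilon> g1"
  define x2 where "x2 = PiG \<alpha> \<epsilon> g2"
  have x1_in: "x1 \<in> trunc_simplex \<epsilon>" unfolding x1_def by (rule PiG_props(1)[OF e])
  have x2_in: "x2 \<in> trunc_simplex \<epsilon>" unfolding x2_def by (rule PiG_props(1)[OF e])
  have S1: "(\<Sum>j\<in>UNIV. (dpsi \<alpha> (x1 j) - g1 j) * (x2 j - x1 j)) \<ge> 0"
    unfolding x1_def using PiG_foc[OF a e x2_in] .
  have S2: "(\<Sum>j\<in>UNIV. (dpsi \<alpha> (x2 j) - g2 j) * (x1 j - x2 j)) \<ge> 0"
    unfolding x2_def using PiG_foc[OF a e x1_in] .
  have "(\<Sum>j\<in>UNIV. (dpsi \<alpha> (x1 j) - g1 j) * (x2 j - x1 j)) + (\<Sum>j\<in>UNIV. (dpsi \<alpha> (x2 j) - g2 j) * (x1 j - x2 j))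
        = (\<Sum>j\<in>UNIV. (g1 j - g2 j) * (x1 j - x2 j)) - (\<Sum>j\<in>UNIV. (dpsi \<alpha> (x1 j) - dpsi \<alpha> (x2 j)) * (x1 j - x2 j))"
  proof -
    have "(\<Sum>j\<in>UNIV. (dpsi \<alpha> (x1 j) - g1 j) * (x2 j - x1 j)) + (\<Sum>j\<in>UNIV. (dpsi \<alpha> (x2 j) - g2 j) * (x1 j - x2 j))
       = (\<Sum>j\<in>UNIV. (dpsi \<alpha> (x1 j) - g1 j) * (x2 j - x1 j) + (dpsi \<alpha> (x2 j) - g2 j) * (x1 j - x2 j))"
      by (rule sum.distrib[symmetric])
    also have "\<dots> = (\<Sum>j\<in>UNIV. (g1 j - g2 j) * (x1 j - x2 j) - (dpsi \<alpha> (x1 j) - dpsi \<alpha> (x2 j)) * (x1 j - x2 j))"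
      by (rule sum.cong) (simp_all add: algebra_simps)
    also have "\<dots> = (\<Sum>j\<in>UNIV. (g1 j - g2 j) * (x1 j - x2 j)) - (\<Sum>j\<in>UNIV. (dpsi \<alpha> (x1 j) - dpsi \<alpha> (x2 j)) * (x1 j - x2 j))"
      by (rule sum_subtractf)
    finally show ?thesis .
  qed
  with S1 S2 have main: "(\<Sum>j\<in>UNIV. (dpsi \<alpha> (x1 j) - dpsi \<alpha> (x2 j)) * (x1 j - x2 j)) \<le> (\<Sum>j\<in>UNIV. (g1 j - g2 j) * (x1 j - x2 j))"
    by linarith
  have b1: "0 < x1 j" "x1 j \<le> 1" "0 < x2 j" "x2 j \<le> 1" for j
    using simplex_bounds[OF x1_in e(1)] simplex_bounds[OF x2_in e(1)] by auto
  have "(x1 i - x2 i)^2 \<le> (\<Sum>j\<in>UNIV. (x1 j - x2 j)^2)"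
    by (rule member_le_sum) simp_all
  also have "\<dots> \<le> (\<Sum>j\<in>UNIV. (dpsi \<alpha> (x1 j) - dpsi \<alpha> (x2 j)) * (x1 j - x2 j))"
    by (rule sum_mono) (rule dpsi_S3[OF a b1])
  also have "\<dots> \<le> (\<Sum>j\<in>UNIV. (g1 j - g2 j) * (x1 j - x2 j))" by (rule main)
  also have "\<dots> \<le> (\<Sum>j\<in>UNIV. \<bar>g1 j - g2 j\<bar>)"
  proof (rule sum_mono)
    fix j
    have "\<bar>x1 j - x2 j\<bar> \<le> 1" using b1[of j] by simp
    then have "\<bar>g1 j - g2 j\<bar> * \<bar>x1 j - x2 j\<bar> \<le> \<bar>g1 j - g2 j\<bar> * 1"
      by (intro mult_left_mono) auto
    moreover have "(g1 j - g2 j) * (x1 j - x2 j) \<le> \<bar>g1 j - g2 j\<bar> * \<bar>x1 j - x2 j\<bar>"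
      by (simp add: abs_mult[symmetric])
    ultimately show "(g1 j - g2 j) * (x1 j - x2 j) \<le> \<bar>g1 j - g2 j\<bar>" by simp
  qed
  finally show ?thesis by (simp add: x1_def x2_def)
qed

lemma PiG_cont:
  assumes a: "0 \<le> \<alpha>" "\<alpha> \<le> 1" and e: "0 < \<epsilon>" "real CARD('k::finite) * \<epsilon> \<le> 1"
  shows "continuous_on UNIV (PiG \<alpha> \<epsilon> :: ('k \<Rightarrow> real) \<Rightarrow> ('k \<Rightarrow> real))"
proof (rule continuous_on_coordinatewise_then_product)
  fix i :: 'k
  show "continuous_on UNIV (\<lambda>g. PiG \<alpha> \<epsilon> g i)"
  proof (rule continuous_at_imp_continuous_on, rule ballI)
    fix g0 :: "'k \<Rightarrow> real"
    have coord: "((\<lambda>g::'k \<Rightarrow> real. g j) \<longlongrightarrow> g0 j) (at g0)" for j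
    proof -
      have "isCont (\<lambda>g::'k \<Rightarrow> real. g j) g0"
        using continuous_on_eq_continuous_at[OF open_UNIV, of "\<lambda>g::'k \<Rightarrow> real. g j"]
          continuous_on_product_coordinates[of j] by simp
      then show ?thesis unfolding isCont_def .
    qed
    have lim: "((\<lambda>g. sqrt (\<Sum>j\<in>UNIV. \<bar>g j - g0 j\<bar>)) \<longlongrightarrow> sqrt (\<Sum>j\<in>UNIV. \<bar>g0 j - g0 j\<bar>)) (at g0)"
      by (intro tendsto_intros coord)
    have "((\<lambda>g. PiG \<alpha> \<epsilon> g i - PiG \<alpha> \<epsilon> g0 i) \<longlongrightarrow> 0) (at g0)"
    proof (rule Lim_null_comparison)
      show "\<forall>\<^sub>F g in at g0. norm (PiG \<alpha> \<epsilon> g i - PiG \<alpha> \<epsilon> g0 i) \<le> sqrt (\<Sum>j\<in>UNIV. \<bar>g j - g0 j\<bar>)"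
      proof (rule always_eventually, rule allI)
        fix g :: "'k \<Rightarrow> real"
        have "(PiG \<alpha> \<epsilon> g i - PiG \<alpha> \<epsilon> g0 i)^2 \<le> (\<Sum>j\<in>UNIV. \<bar>g j - g0 j\<bar>)"
          by (rule PiG_lip[OF a e])
        then have "sqrt ((PiG \<alpha> \<epsilon> g i - PiG \<alpha> \<epsilon> g0 i)^2) \<le> sqrt (\<Sum>j\<in>UNIV. \<bar>g j - g0 j\<bar>)"
          by (rule real_sqrt_le_mono)
        then show "norm (PiG \<alpha> \<epsilon> g i - PiG \<alpha> \<epsilon> g0 i) \<le> sqrt (\<Sum>j\<in>UNIV. \<bar>g j - g0 j\<bar>)"
          by simp
      qed
      show "((\<lambda>g. sqrt (\<Sum>j\<in>UNIV. \<bar>g j - g0 j\<bar>)) \<longlongrightarrow> 0) (at g0)" using lim by simp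
    qed
    then show "isCont (\<lambda>g. PiG \<alpha> \<epsilon> g i) g0"
      unfolding isCont_def by (rule LIM_zero_cancel)
  qed
qed

lemma proj_step_eq: "proj_step \<alpha> \<epsilon> z = PiG \<alpha> \<epsilon> (grad_phi \<alpha> (z::'k::finite \<Rightarrow> real))"
proof -
  define C where "C = inner_vec (grad_phi \<alpha> z) z - mirror_phi \<alpha> z"
  have e: "(\<lambda>x. bregman \<alpha> x z) = (\<lambda>x. Fobj \<alpha> (grad_phi \<alpha> z) x + C)"
    by (rule ext) (simp add: bregman_def Fobj_def C_def inner_vec_def sum_subtractf right_diff_distrib)
  have "is_arg_min (\<lambda>x. bregman \<alpha> x z) (\<lambda>x. x \<in> trunc_simplex \<epsilon>) = is_arg_min (Fobj \<alpha> (grad_phi \<alpha> z)) (\<lambda>x. x \<in> trunc_simplex \<epsilon>)"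
    unfolding e by (simp add: is_arg_min_def fun_eq_iff)
  then show ?thesis unfolding proj_step_def PiG_def arg_min_on_def arg_min_def by simp
qed

definition Ob :: "real \<Rightarrow> real \<Rightarrow> ('k::finite \<Rightarrow> real) \<Rightarrow> ('k \<Rightarrow> real) \<Rightarrow> ('k \<Rightarrow> real) \<Rightarrow> real" where
  "Ob \<alpha> \<eta> lt x w = \<eta> * inner_vec lt w + bregman \<alpha> w x"

definition cdflt :: "'k::finite \<Rightarrow> real" where
  "cdflt = (SOME w. False)"

lemma Ob_sum: "Ob \<alpha> \<eta> lt x w = (\<Sum>j\<in>UNIV. \<eta> * lt j * w j + Ds \<alpha> (w j) (x j))"
  by (simp add: Ob_def inner_vec_def bregman_sum sum.distrib sum_distrib_left mult.assoc)

lemma Ob_shift: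
  assumes "grad_phi \<alpha> ws = (\<lambda>j. grad_phi \<alpha> x j - \<eta> * lt j)"
  shows "Ob \<alpha> \<eta> lt x w = Ob \<alpha> \<eta> lt x ws + bregman \<alpha> w (ws::'k::finite \<Rightarrow> real)"
proof -
  have g: "grad_phi \<alpha> ws j - grad_phi \<alpha> x j = - (\<eta> * lt j)" for j
    using assms by (simp add: fun_eq_iff)
  have "bregman \<alpha> w x = bregman \<alpha> w ws + bregman \<alpha> ws x
     + inner_vec (\<lambda>i. grad_phi \<alpha> ws i - grad_phi \<alpha> x i) (\<lambda>i. w i - ws i)"
    by (rule bregman_three)
  also have "inner_vec (\<lambda>i. grad_phi \<alpha> ws i - grad_phi \<alpha> x i) (\<lambda>i. w i - ws i)
      = \<eta> * inner_vec lt ws - \<eta> * inner_vec lt w"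
    unfolding g inner_vec_def
    by (simp add: sum_distrib_left sum_subtractf[symmetric] algebra_simps)
  finally show ?thesis unfolding Ob_def by simp
qed

lemma argmin_good:
  assumes a: "0 \<le> \<alpha>" "\<alpha> \<le> 1" and xpos: "\<And>j. 0 < x j" and wpos: "\<And>j. 0 < ws j"
    and g: "grad_phi \<alpha> ws = (\<lambda>j. grad_phi \<alpha> x j - \<eta> * lt j)"
  shows "arg_min_on (Ob \<alpha> \<eta> lt x) pos_orthant = (ws::'k::finite \<Rightarrow> real)"
proof -
  have "is_arg_min (Ob \<alpha> \<eta> lt x) (\<lambda>w. w \<in> pos_orthant) w \<longleftrightarrow> w = ws" for w
  proof
    assume m: "is_arg_min (Ob \<alpha> \<eta> lt x) (\<lambda>w. w \<in> pos_orthant) w"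
    have wsp: "ws \<in> pos_orthant" using wpos by (simp add: pos_orthant_def)
    have wp: "\<And>j. 0 < w j" using m by (auto simp: is_arg_min_def pos_orthant_def)
    have le: "Ob \<alpha> \<eta> lt x w \<le> Ob \<alpha> \<eta> lt x ws"
      using m wsp unfolding is_arg_min_def not_less[symmetric] by blast
    show "w = ws"
    proof (rule ccontr)
      assume "w \<noteq> ws"
      then have "bregman \<alpha> w ws > 0" by (intro bregman_pos[OF a]) (use wp wpos in auto)
      then show False using le Ob_shift[OF g, of w] by simp
    qed
  next
    assume "w = ws"
    moreover have "Ob \<alpha> \<eta> lt x ws \<le> Ob \<alpha> \<eta> lt x v" if "v \<in> pos_orthant" for v
    proof -
      have "bregman \<alpha> v ws \<ge> 0"
        by (intro bregman_nonneg[OF a]) (use wpos that in \<open>auto simp: pos_orthant_def\<close>)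
      then show ?thesis using Ob_shift[OF g, of v] by simp
    qed
    ultimately show "is_arg_min (Ob \<alpha> \<eta> lt x) (\<lambda>w. w \<in> pos_orthant) w"
      unfolding is_arg_min_def
    proof (intro conjI notI)
      show "w \<in> pos_orthant" using wpos \<open>w = ws\<close> by (simp add: pos_orthant_def)
    next
      assume "\<exists>y. y \<in> pos_orthant \<and> Ob \<alpha> \<eta> lt x y < Ob \<alpha> \<eta> lt x w"
      then obtain y where "y \<in> pos_orthant" "Ob \<alpha> \<eta> lt x y < Ob \<alpha> \<eta> lt x w" by blast
      then show False using \<open>w = ws\<close> \<open>\<And>v. v \<in> pos_orthant \<Longrightarrow> Ob \<alpha> \<eta> lt x ws \<le> Ob \<alpha> \<eta> lt x v\<close>
        by force
    qed
  qed
  then have "(\<lambda>w. is_arg_min (Ob \<alpha> \<eta> lt x) (\<lambda>w. w \<in> pos_orthant) w) = (\<lambda>w. w = ws)" by (rule ext)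
  then show ?thesis unfolding arg_min_on_def arg_min_def by simp
qed

lemma dpsi_lt1:
  assumes "0 \<le> \<alpha>" "\<alpha> < 1" "0 < t"
  shows "dpsi \<alpha> t = (1 - t powr (\<alpha> - 1)) / (1 - \<alpha>)"
proof (cases "\<alpha> = 0")
  case True
  then show ?thesis using assms by (simp add: dpsi_def powr_minus_divide)
next
  case False
  then show ?thesis using assms by (simp add: dpsi_def field_simps)
qed

lemma argmin_bad:
  assumes a: "0 \<le> \<alpha>" "\<alpha> < 1" and xpos: "0 < x c"
    and q: "x c powr (\<alpha> - 1) + (1 - \<alpha>) * \<eta> * lt c \<le> 0"
  shows "arg_min_on (Ob \<alpha> \<eta> lt x) pos_orthant = (cdflt::'k::finite \<Rightarrow> real)"
proof -
  have "\<not> is_arg_min (Ob \<alpha> \<eta> lt x) (\<lambda>w. w \<in> pos_orthant) w" for w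
  proof
    assume m: "is_arg_min (Ob \<alpha> \<eta> lt x) (\<lambda>w. w \<in> pos_orthant) w"
    then have wp: "\<And>j. 0 < w j" by (auto simp: is_arg_min_def pos_orthant_def)
    define w' where "w' = w(c := w c + 1)"
    have w'p: "w' \<in> pos_orthant" using wp by (simp add: w'_def pos_orthant_def add_pos_pos)
    define F where "F = (\<lambda>j s. \<eta> * lt j * s + Ds \<alpha> s (x j))"
    have "Ob \<alpha> \<eta> lt x w' - Ob \<alpha> \<eta> lt x w = (\<Sum>j\<in>UNIV. F j (w' j) - F j (w j))"
      unfolding Ob_sum F_def by (simp add: sum_subtractf)
    also have "\<dots> = (\<Sum>j\<in>UNIV. if j = c then F c (w c + 1) - F c (w c) else 0)"
      by (rule sum.cong) (simp_all add: w'_def)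
    also have "\<dots> = F c (w c + 1) - F c (w c)" by simp
    also have "\<dots> < 0"
    proof -
      have wc: "w c < w c + 1" by simp
      obtain z where z: "w c < z" "z < w c + 1" "psi \<alpha> (w c + 1) - psi \<alpha> (w c) = (w c + 1 - w c) * dpsi \<alpha> z"
        using MVT2[OF wc, of "psi \<alpha>" "dpsi \<alpha>"] psi_deriv wp[of c] by force
      have zp: "0 < z" using z wp[of c] by simp
      have "F c (w c + 1) - F c (w c) = \<eta> * lt c + dpsi \<alpha> z - dpsi \<alpha> (x c)"
        unfolding F_def Ds_def using z by (simp add: algebra_simps)
      also have "\<dots> = (x c powr (\<alpha> - 1) + (1 - \<alpha>) * \<eta> * lt c - z powr (\<alpha> - 1)) / (1 - \<alpha>)"
      proof -
        have nz: "1 - \<alpha> \<noteq> 0" using a by simp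
        have alg: "\<And>e X Z D::real. D \<noteq> 0 \<Longrightarrow> e + (1 - Z)/D - (1 - X)/D = (X + D*e - Z)/D"
          by (simp add: field_simps)
        show ?thesis using alg[OF nz, of "\<eta> * lt c" "z powr (\<alpha> - 1)" "x c powr (\<alpha> - 1)"] a
          by (simp add: dpsi_lt1 zp xpos mult.assoc)
      qed
      also have "\<dots> < 0"
      proof -
        have "0 < z powr (\<alpha> - 1)" using zp by simp
        then have "x c powr (\<alpha> - 1) + (1 - \<alpha>) * \<eta> * lt c - z powr (\<alpha> - 1) < 0" using q by linarith
        then show ?thesis using a by (simp add: divide_neg_pos)
      qed
      finally show ?thesis .
    qed
    finally have "Ob \<alpha> \<eta> lt x w' < Ob \<alpha> \<eta> lt x w" by simp
    then show False using m w'p by (auto simp: is_arg_min_def)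
  qed
  then have "is_arg_min (Ob \<alpha> \<eta> lt x) (\<lambda>w. w \<in> pos_orthant) = (\<lambda>w. False)" by (intro ext) simp
  then show ?thesis unfolding arg_min_on_def arg_min_def cdflt_def by simp
qed

definition ltv :: "real \<Rightarrow> real \<Rightarrow> ('k::finite \<Rightarrow> real) \<Rightarrow> 'k \<Rightarrow> real \<Rightarrow> ('k \<Rightarrow> real)" where
  "ltv lam \<epsilon> x a l = (\<lambda>j. loss_est x a l j + lam * grad_R_eps \<epsilon> x j)"

definition qv :: "real \<Rightarrow> real \<Rightarrow> real \<Rightarrow> real \<Rightarrow> ('k::finite \<Rightarrow> real) \<Rightarrow> 'k \<Rightarrow> real \<Rightarrow> 'k \<Rightarrow> real" where
  "qv \<alpha> \<eta> lam \<epsilon> x a l j = x j powr (\<alpha> - 1) + (1 - \<alpha>) * \<eta> * ltv lam \<epsilon> x a l j"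

definition condv :: "real \<Rightarrow> real \<Rightarrow> real \<Rightarrow> real \<Rightarrow> ('k::finite \<Rightarrow> real) \<Rightarrow> 'k \<Rightarrow> real \<Rightarrow> bool" where
  "condv \<alpha> \<eta> lam \<epsilon> x a l = (\<alpha> = 1 \<or> 0 < qv \<alpha> \<eta> lam \<epsilon> x a l a)"

definition znew :: "real \<Rightarrow> real \<Rightarrow> real \<Rightarrow> real \<Rightarrow> ('k::finite \<Rightarrow> real) \<Rightarrow> 'k \<Rightarrow> real \<Rightarrow> ('k \<Rightarrow> real)" where
  "znew \<alpha> \<eta> lam \<epsilon> x a l = (\<lambda>j. if \<alpha> = 1 then x j * exp (- (\<eta> * ltv lam \<epsilon> x a l j))
       else qv \<alpha> \<eta> lam \<epsilon> x a l j powr (1 / (\<alpha> - 1)))"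

definition NextG :: "real \<Rightarrow> real \<Rightarrow> real \<Rightarrow> real \<Rightarrow> ('k::finite \<Rightarrow> real) \<Rightarrow> 'k \<Rightarrow> real \<Rightarrow> ('k \<Rightarrow> real)" where
  "NextG \<alpha> \<eta> lam \<epsilon> x a l = (if condv \<alpha> \<eta> lam \<epsilon> x a l
      then (\<lambda>j. grad_phi \<alpha> x j - \<eta> * ltv lam \<epsilon> x a l j) else grad_phi \<alpha> cdflt)"

lemma md_step_Ob:
  "md_step \<alpha> \<eta> lam \<epsilon> z a l =
     arg_min_on (Ob \<alpha> \<eta> (ltv lam \<epsilon> (proj_step \<alpha> \<epsilon> z) a l) (proj_step \<alpha> \<epsilon> z)) pos_orthant"
  by (simp add: md_step_def Let_def ltv_def Ob_def[abs_def])

lemma ltv_other_nonneg: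
  assumes "x \<in> trunc_simplex \<epsilon>" "0 < \<epsilon>" "0 < lam" "j \<noteq> a"
  shows "0 \<le> ltv lam \<epsilon> x a l j"
proof -
  have "\<epsilon> \<le> x j" using simplex_bounds[OF assms(1,2)] by simp
  then have "1 / x j \<le> 1 / \<epsilon>" using assms(2) by (simp add: divide_left_mono)
  then show ?thesis using assms by (simp add: ltv_def loss_est_def grad_R_eps_def)
qed

lemma ltv_nonneg:
  assumes "x \<in> trunc_simplex \<epsilon>" "0 < \<epsilon>" "0 < lam" "0 \<le> l"
  shows "0 \<le> ltv lam \<epsilon> x a l j"
proof -
  have "\<epsilon> \<le> x j" using simplex_bounds[OF assms(1,2)] by simp
  then have "1 / x j \<le> 1 / \<epsilon>" using assms(2) by (simp add: divide_left_mono)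
  moreover have "0 \<le> loss_est x a l j" using assms simplex_bounds(3)[OF assms(1,2), of a]
    by (simp add: loss_est_def)
  ultimately show ?thesis using assms by (simp add: ltv_def grad_R_eps_def)
qed

lemma znew_props:
  assumes a: "0 \<le> \<alpha>" "\<alpha> \<le> 1" and e: "0 < \<epsilon>" and lam: "0 < lam" and eta: "0 < \<eta>"
    and x: "x \<in> trunc_simplex \<epsilon>" and c: "condv \<alpha> \<eta> lam \<epsilon> x a l"
  shows "\<And>j. 0 < znew \<alpha> \<eta> lam \<epsilon> x a l j"
    and "grad_phi \<alpha> (znew \<alpha> \<eta> lam \<epsilon> x a l) = (\<lambda>j. grad_phi \<alpha> x j - \<eta> * ltv lam \<epsilon> x a l j)"
proof -
  have xpos: "0 < x j" for j using simplex_bounds[OF x e] by simp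
  have qpos: "0 < qv \<alpha> \<eta> lam \<epsilon> x a l j" if "\<alpha> \<noteq> 1" for j
  proof (cases "j = a")
    case True then show ?thesis using c that by (simp add: condv_def)
  next
    case False
    have "0 \<le> (1 - \<alpha>) * \<eta> * ltv lam \<epsilon> x a l j"
      using ltv_other_nonneg[OF x e lam False] a eta by simp
    moreover have "0 < x j powr (\<alpha> - 1)" using xpos[of j] by simp
    ultimately show ?thesis unfolding qv_def by linarith
  qed
  show "0 < znew \<alpha> \<eta> lam \<epsilon> x a l j" for j
    using xpos[of j] qpos[of j] by (cases "\<alpha> = 1") (auto simp: znew_def)
  show "grad_phi \<alpha> (znew \<alpha> \<eta> lam \<epsilon> x a l) = (\<lambda>j. grad_phi \<alpha> x j - \<eta> * ltv lam \<epsilon> x a l j)"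
  proof (rule ext)
    fix j
    show "grad_phi \<alpha> (znew \<alpha> \<eta> lam \<epsilon> x a l) j = grad_phi \<alpha> x j - \<eta> * ltv lam \<epsilon> x a l j"
    proof (cases "\<alpha> = 1")
      case True
      then show ?thesis using xpos[of j] by (simp add: grad_phi_def znew_def ln_mult)
    next
      case False
      then have a1: "\<alpha> < 1" using a by simp
      define q where "q = qv \<alpha> \<eta> lam \<epsilon> x a l j"
      have qp: "0 < q" using qpos[OF False] q_def by simp
      have zj: "znew \<alpha> \<eta> lam \<epsilon> x a l j = q powr (1 / (\<alpha> - 1))" using False by (simp add: znew_def q_def)
      have zp: "0 < q powr (1 / (\<alpha> - 1))" using qp by simp
      have "(q powr (1 / (\<alpha> - 1))) powr (\<alpha> - 1) = q"
        using qp a1 by (simp add: powr_powr)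
      then have "dpsi \<alpha> (q powr (1 / (\<alpha> - 1))) = (1 - q) / (1 - \<alpha>)"
        using dpsi_lt1[OF a(1) a1 zp] by simp
      also have "\<dots> = dpsi \<alpha> (x j) - \<eta> * ltv lam \<epsilon> x a l j"
      proof -
        have nz: "1 - \<alpha> \<noteq> 0" using a1 by simp
        have "(1 - q) / (1 - \<alpha>) = (1 - x j powr (\<alpha> - 1)) / (1 - \<alpha>) - ((1 - \<alpha>) * (\<eta> * ltv lam \<epsilon> x a l j)) / (1 - \<alpha>)"
          unfolding q_def qv_def by (simp add: diff_divide_distrib[symmetric] algebra_simps)
        also have "\<dots> = dpsi \<alpha> (x j) - \<eta> * ltv lam \<epsilon> x a l j"
          using nz dpsi_lt1[OF a(1) a1 xpos[of j]] by simp
        finally show ?thesis .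
      qed
      finally show ?thesis by (simp add: grad_phi_eq zj)
    qed
  qed
qed

lemma md_step_good:
  assumes a: "0 \<le> \<alpha>" "\<alpha> \<le> 1" and e: "0 < \<epsilon>" "real CARD('k::finite) * \<epsilon> \<le> 1"
    and lam: "0 < lam" and eta: "0 < \<eta>"
    and c: "condv \<alpha> \<eta> lam \<epsilon> (proj_step \<alpha> \<epsilon> z) a l"
  shows "md_step \<alpha> \<eta> lam \<epsilon> (z::'k \<Rightarrow> real) a l = znew \<alpha> \<eta> lam \<epsilon> (proj_step \<alpha> \<epsilon> z) a l"
proof -
  have x: "proj_step \<alpha> \<epsilon> z \<in> trunc_simplex \<epsilon>" unfolding proj_step_eq by (rule PiG_props(1)[OF e])
  show ?thesis unfolding md_step_Ob
    by (rule argmin_good[OF a]) (use simplex_bounds[OF x e(1)] znew_props[OF a e(1) lam eta x c] in auto)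
qed

lemma md_step_bad:
  assumes a: "0 \<le> \<alpha>" "\<alpha> \<le> 1" and e: "0 < \<epsilon>" "real CARD('k::finite) * \<epsilon> \<le> 1"
    and c: "\<not> condv \<alpha> \<eta> lam \<epsilon> (proj_step \<alpha> \<epsilon> z) a l"
  shows "md_step \<alpha> \<eta> lam \<epsilon> (z::'k \<Rightarrow> real) a l = cdflt"
proof -
  have x: "proj_step \<alpha> \<epsilon> z \<in> trunc_simplex \<epsilon>" unfolding proj_step_eq by (rule PiG_props(1)[OF e])
  have a1: "\<alpha> < 1" using c a by (auto simp: condv_def)
  show ?thesis unfolding md_step_Ob
    by (rule argmin_bad[OF a(1) a1, of _ a]) (use simplex_bounds[OF x e(1)] c in \<open>auto simp: condv_def qv_def\<close>)
qed

lemma grad_md_step: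
  assumes a: "0 \<le> \<alpha>" "\<alpha> \<le> 1" and e: "0 < \<epsilon>" "real CARD('k::finite) * \<epsilon> \<le> 1"
    and lam: "0 < lam" and eta: "0 < \<eta>"
  shows "grad_phi \<alpha> (md_step \<alpha> \<eta> lam \<epsilon> (z::'k \<Rightarrow> real) a l) = NextG \<alpha> \<eta> lam \<epsilon> (proj_step \<alpha> \<epsilon> z) a l"
proof (cases "condv \<alpha> \<eta> lam \<epsilon> (proj_step \<alpha> \<epsilon> z) a l")
  case True
  have x: "proj_step \<alpha> \<epsilon> z \<in> trunc_simplex \<epsilon>" unfolding proj_step_eq by (rule PiG_props(1)[OF e])
  show ?thesis using True md_step_good[OF a e lam eta True] znew_props(2)[OF a e(1) lam eta x True]
    by (simp add: NextG_def)
next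
  case False
  then show ?thesis using md_step_bad[OF a e False] by (simp add: NextG_def)
qed

lemma z_of_snoc: "z_of \<alpha> \<eta> lam \<epsilon> (h @ [(a, l)]) = md_step \<alpha> \<eta> lam \<epsilon> (z_of \<alpha> \<eta> lam \<epsilon> h) a l"
  by (simp add: z_of_def)

lemma x_of_in:
  assumes "0 < \<epsilon>" "real CARD('k::finite) * \<epsilon> \<le> 1"
  shows "x_of \<alpha> \<eta> lam \<epsilon> (h :: ('k \<times> real) list) \<in> trunc_simplex \<epsilon>"
  unfolding x_of_def proj_step_eq by (rule PiG_props(1)[OF assms])

lemma x_of_snoc:
  assumes a: "0 \<le> \<alpha>" "\<alpha> \<le> 1" and e: "0 < \<epsilon>" "real CARD('k::finite) * \<epsilon> \<le> 1"
    and lam: "0 < lam" and eta: "0 < \<eta>"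
  shows "x_of \<alpha> \<eta> lam \<epsilon> (h @ [(a::'k, l)]) = PiG \<alpha> \<epsilon> (NextG \<alpha> \<eta> lam \<epsilon> (x_of \<alpha> \<eta> lam \<epsilon> h) a l)"
  unfolding x_of_def z_of_snoc proj_step_eq[of \<alpha> \<epsilon> "md_step _ _ _ _ _ _ _"] grad_md_step[OF a e lam eta]
  by simp

lemma round_bound:
  assumes a: "0 \<le> \<alpha>" "\<alpha> \<le> 1" and e: "0 < \<epsilon>" "real CARD('k::finite) * \<epsilon> \<le> 1"
    and lam: "0 < lam" and eta: "0 < \<eta>" and y: "y \<in> trunc_simplex \<epsilon>"
    and l: "0 \<le> l" "l \<le> 1"
  shows "\<eta> * inner_vec (ltv lam \<epsilon> (x_of \<alpha> \<eta> lam \<epsilon> h) a l) (\<lambda>i. x_of \<alpha> \<eta> lam \<epsilon> h i - y i)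
    \<le> bregman \<alpha> y (x_of \<alpha> \<eta> lam \<epsilon> h) - bregman \<alpha> y (x_of \<alpha> \<eta> lam \<epsilon> (h @ [(a::'k, l)]))
      + \<eta>^2 * (local_norm_sq \<alpha> (x_of \<alpha> \<eta> lam \<epsilon> h) (loss_est (x_of \<alpha> \<eta> lam \<epsilon> h) a l)
         + lam^2 * local_norm_sq \<alpha> (x_of \<alpha> \<eta> lam \<epsilon> h) (grad_R_eps \<epsilon> (x_of \<alpha> \<eta> lam \<epsilon> h)))"
proof -
  define x where "x = x_of \<alpha> \<eta> lam \<epsilon> h"
  define x' where "x' = x_of \<alpha> \<eta> lam \<epsilon> (h @ [(a, l)])"
  define lt where "lt = ltv lam \<epsilon> x a l"
  define z where "z = z_of \<alpha> \<eta> lam \<epsilon> h"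
  have xz: "x = proj_step \<alpha> \<epsilon> z" by (simp add: x_def z_def x_of_def)
  have x_in: "x \<in> trunc_simplex \<epsilon>" unfolding x_def by (rule x_of_in[OF e])
  have x'_in: "x' \<in> trunc_simplex \<epsilon>" unfolding x'_def by (rule x_of_in[OF e])
  have xpos: "0 < x j" "x j \<le> 1" for j using simplex_bounds[OF x_in e(1)] by auto
  have x'pos: "0 < x' j" for j using simplex_bounds[OF x'_in e(1)] by auto
  have ypos: "0 < y j" for j using simplex_bounds[OF y e(1)] by auto
  have ltnn: "0 \<le> lt j" for j unfolding lt_def by (rule ltv_nonneg[OF x_in e(1) lam l(1)])
  have c: "condv \<alpha> \<eta> lam \<epsilon> x a l"
  proof (cases "\<alpha> = 1")
    case True then show ?thesis by (simp add: condv_def)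
  next
    case False
    have "0 < x a powr (\<alpha> - 1)" using xpos(1)[of a] by simp
    moreover have "0 \<le> (1 - \<alpha>) * \<eta> * lt a" using a eta ltnn[of a] by simp
    ultimately show ?thesis unfolding condv_def qv_def lt_def by linarith
  qed
  define z' where "z' = znew \<alpha> \<eta> lam \<epsilon> x a l"
  have z'pos: "0 < z' j" for j unfolding z'_def by (rule znew_props(1)[OF a e(1) lam eta x_in c])
  have gz': "grad_phi \<alpha> z' = (\<lambda>j. grad_phi \<alpha> x j - \<eta> * lt j)"
    unfolding z'_def lt_def by (rule znew_props(2)[OF a e(1) lam eta x_in c])
  have x'z': "x' = PiG \<alpha> \<epsilon> (grad_phi \<alpha> z')"
  proof -
    have "x' = proj_step \<alpha> \<epsilon> (md_step \<alpha> \<eta> lam \<epsilon> z a l)"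
      by (simp add: x'_def x_of_def z_of_snoc z_def)
    also have "md_step \<alpha> \<eta> lam \<epsilon> z a l = z'"
      unfolding z'_def xz by (rule md_step_good[OF a e lam eta]) (use c xz in simp)
    finally show ?thesis by (simp add: proj_step_eq)
  qed
  have foc: "inner_vec (\<lambda>i. grad_phi \<alpha> x' i - grad_phi \<alpha> z' i) (\<lambda>i. y i - x' i) \<ge> 0"
    using PiG_foc[OF a e y, of "grad_phi \<alpha> z'"] unfolding x'z'[symmetric]
    by (simp add: inner_vec_def grad_phi_eq)
  have pyth: "bregman \<alpha> y x' \<le> bregman \<alpha> y z'"
  proof -
    have "bregman \<alpha> x' z' \<ge> 0" by (rule bregman_nonneg[OF a]) (use x'pos z'pos in auto)
    then show ?thesis using bregman_three[of \<alpha> y z' x'] foc by linarith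
  qed
  have tp: "bregman \<alpha> y z' = bregman \<alpha> y x + bregman \<alpha> x z' + \<eta> * inner_vec lt (\<lambda>i. y i - x i)"
  proof -
    have "inner_vec (\<lambda>i. grad_phi \<alpha> x i - grad_phi \<alpha> z' i) (\<lambda>i. y i - x i) = \<eta> * inner_vec lt (\<lambda>i. y i - x i)"
      unfolding gz' inner_vec_def by (simp add: sum_distrib_left algebra_simps)
    then show ?thesis using bregman_three[of \<alpha> y z' x] by simp
  qed
  have inner_neg: "inner_vec lt (\<lambda>i. x i - y i) = - inner_vec lt (\<lambda>i. y i - x i)"
    unfolding inner_vec_def by (simp add: sum_negf[symmetric] algebra_simps)
  have lnb: "bregman \<alpha> x z' \<le> \<eta>^2 * (local_norm_sq \<alpha> x (loss_est x a l) + lam^2 * local_norm_sq \<alpha> x (grad_R_eps \<epsilon> x))"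
  proof -
    have "bregman \<alpha> x z' = (\<Sum>j\<in>UNIV. Ds \<alpha> (x j) (z' j))" by (rule bregman_sum)
    also have "\<dots> \<le> (\<Sum>j\<in>UNIV. \<eta>^2 * (((loss_est x a l j)^2 * x j powr (2 - \<alpha>))
                     + lam^2 * ((grad_R_eps \<epsilon> x j)^2 * x j powr (2 - \<alpha>))))"
    proof (rule sum_mono)
      fix j
      have dz: "dpsi \<alpha> (z' j) = dpsi \<alpha> (x j) - \<eta> * lt j"
        using gz' by (simp add: grad_phi_eq fun_eq_iff)
      have "Ds \<alpha> (x j) (z' j) \<le> (\<eta> * lt j)^2 * x j powr (2 - \<alpha>) / 2"
        by (rule Ds_S4[OF a xpos(1) z'pos]) (use eta ltnn[of j] dz in auto)
      also have "\<dots> \<le> \<eta>^2 * (((loss_est x a l j)^2 * x j powr (2 - \<alpha>))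
                     + lam^2 * ((grad_R_eps \<epsilon> x j)^2 * x j powr (2 - \<alpha>)))"
      proof -
        have ltj: "lt j = loss_est x a l j + lam * grad_R_eps \<epsilon> x j" by (simp add: lt_def ltv_def)
        define p where "p = x j powr (2 - \<alpha>)"
        have p: "0 \<le> p" by (simp add: p_def)
        have sq: "(u + v)^2 / 2 \<le> u^2 + v^2" for u v :: real
        proof -
          have "0 \<le> (u - v)^2" by simp
          then show ?thesis by (simp add: power2_eq_square algebra_simps)
        qed
        have "(\<eta> * lt j)^2 * p / 2 = \<eta>^2 * p * ((loss_est x a l j + lam * grad_R_eps \<epsilon> x j)^2 / 2)"
          by (simp add: ltj power_mult_distrib)
        also have "\<dots> \<le> \<eta>^2 * p * ((loss_est x a l j)^2 + (lam * grad_R_eps \<epsilon> x j)^2)"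
          by (rule mult_left_mono[OF sq]) (use p in simp)
        also have "\<dots> = \<eta>^2 * (((loss_est x a l j)^2 * p) + lam^2 * ((grad_R_eps \<epsilon> x j)^2 * p))"
          by (simp add: power_mult_distrib algebra_simps)
        finally show ?thesis by (simp add: p_def)
      qed
      finally show "Ds \<alpha> (x j) (z' j) \<le> \<eta>^2 * (((loss_est x a l j)^2 * x j powr (2 - \<alpha>))
                     + lam^2 * ((grad_R_eps \<epsilon> x j)^2 * x j powr (2 - \<alpha>)))" .
    qed
    also have "\<dots> = \<eta>^2 * (local_norm_sq \<alpha> x (loss_est x a l) + lam^2 * local_norm_sq \<alpha> x (grad_R_eps \<epsilon> x))"
      by (simp add: local_norm_sq_def sum.distrib sum_distrib_left distrib_left)
    finally show ?thesis .
  qed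
  have "\<eta> * inner_vec lt (\<lambda>i. x i - y i) = bregman \<alpha> y x - bregman \<alpha> y z' + bregman \<alpha> x z'"
    using tp inner_neg by simp
  also have "\<dots> \<le> bregman \<alpha> y x - bregman \<alpha> y x' + bregman \<alpha> x z'" using pyth by simp
  finally show ?thesis using lnb unfolding x_def[symmetric] x'_def[symmetric] lt_def[symmetric] by simp
qed

definition goodh :: "('k \<times> real) list \<Rightarrow> bool" where
  "goodh h = (\<forall>p\<in>set h. 0 \<le> snd p \<and> snd p \<le> 1)"

lemma pathB:
  assumes a: "0 \<le> \<alpha>" "\<alpha> \<le> 1" and e: "0 < \<epsilon>" "real CARD('k::finite) * \<epsilon> \<le> 1"
    and lam: "0 < lam" and eta: "0 < \<eta>" and y: "y \<in> trunc_simplex \<epsilon>"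
    and g: "goodh (h :: ('k \<times> real) list)" and len: "length h = T"
  shows "(\<Sum>t<T. inner_vec (\<lambda>i. lhat_round \<alpha> \<eta> lam \<epsilon> h t i + lam * grad_R_eps \<epsilon> (x_round \<alpha> \<eta> lam \<epsilon> h t) i)
                         (\<lambda>i. x_round \<alpha> \<eta> lam \<epsilon> h t i - y i))
    \<le> bregman \<alpha> y (x_round \<alpha> \<eta> lam \<epsilon> h 0) / \<eta>
      + \<eta> * (\<Sum>t<T. local_norm_sq \<alpha> (x_round \<alpha> \<eta> lam \<epsilon> h t) (lhat_round \<alpha> \<eta> lam \<epsilon> h t))
      + \<eta> * lam^2 * (\<Sum>t<T. local_norm_sq \<alpha> (x_round \<alpha> \<eta> lam \<epsilon> h t) (grad_R_eps \<epsilon> (x_round \<alpha> \<eta> lam \<epsilon> h t)))"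
proof -
  define X where "X = x_round \<alpha> \<eta> lam \<epsilon> h"
  define D where "D = (\<lambda>t. bregman \<alpha> y (X t))"
  define I where "I = (\<lambda>t. inner_vec (\<lambda>i. lhat_round \<alpha> \<eta> lam \<epsilon> h t i + lam * grad_R_eps \<epsilon> (X t) i) (\<lambda>i. X t i - y i))"
  define N1 where "N1 = (\<lambda>t. local_norm_sq \<alpha> (X t) (lhat_round \<alpha> \<eta> lam \<epsilon> h t))"
  define N2 where "N2 = (\<lambda>t. local_norm_sq \<alpha> (X t) (grad_R_eps \<epsilon> (X t)))"
  have step: "\<eta> * I t \<le> D t - D (Suc t) + \<eta>^2 * (N1 t + lam^2 * N2 t)" if t: "t < T" for t
  proof -
    obtain ar lr where p: "h ! t = (ar, lr)" by (cases "h ! t")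
    have "h ! t \<in> set h" using t len by simp
    then have l: "0 \<le> lr" "lr \<le> 1" using g p by (auto simp: goodh_def)
    have tk: "take (Suc t) h = take t h @ [(ar, lr)]" using t len p by (simp add: take_Suc_conv_app_nth)
    have XS: "X (Suc t) = x_of \<alpha> \<eta> lam \<epsilon> (take t h @ [(ar, lr)])" by (simp add: X_def x_round_def tk)
    have Xt: "X t = x_of \<alpha> \<eta> lam \<epsilon> (take t h)" by (simp add: X_def x_round_def)
    have lh: "lhat_round \<alpha> \<eta> lam \<epsilon> h t = loss_est (x_of \<alpha> \<eta> lam \<epsilon> (take t h)) ar lr"
      by (simp add: lhat_round_def p x_round_def)
    have lh': "lhat_round \<alpha> \<eta> lam \<epsilon> h t = loss_est (X t) ar lr" using lh Xt by simp
    have le: "ltv lam \<epsilon> (X t) ar lr = (\<lambda>i. loss_est (X t) ar lr i + lam * grad_R_eps \<epsilon> (X t) i)"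
      by (simp add: ltv_def)
    show ?thesis
      using round_bound[OF a e lam eta y l, of "take t h" ar]
      unfolding I_def D_def N1_def N2_def XS Xt[symmetric] lh' le by simp
  qed
  have "\<eta> * (\<Sum>t<T. I t) = (\<Sum>t<T. \<eta> * I t)" by (simp add: sum_distrib_left)
  also have "\<dots> \<le> (\<Sum>t<T. (D t - D (Suc t)) + \<eta>^2 * (N1 t + lam^2 * N2 t))"
    by (rule sum_mono) (use step in simp)
  also have "\<dots> = (D 0 - D T) + \<eta>^2 * ((\<Sum>t<T. N1 t) + lam^2 * (\<Sum>t<T. N2 t))"
  proof -
    have "(\<Sum>t<T. D t - D (Suc t)) = D 0 - D T"
      using sum_lessThan_telescope[of D T] by (simp add: sum_subtractf)
    then show ?thesis by (simp add: sum.distrib sum_distrib_left distrib_left)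
  qed
  also have "\<dots> \<le> D 0 + \<eta>^2 * ((\<Sum>t<T. N1 t) + lam^2 * (\<Sum>t<T. N2 t))"
  proof -
    have XT: "X T \<in> trunc_simplex \<epsilon>" unfolding X_def x_round_def by (rule x_of_in[OF e])
    have "0 \<le> D T" unfolding D_def
      by (rule bregman_nonneg[OF a]) (use simplex_bounds[OF y e(1)] simplex_bounds[OF XT e(1)] in auto)
    then show ?thesis by simp
  qed
  finally have "\<eta> * (\<Sum>t<T. I t) \<le> D 0 + \<eta>^2 * ((\<Sum>t<T. N1 t) + lam^2 * (\<Sum>t<T. N2 t))" .
  then have "(\<Sum>t<T. I t) \<le> (D 0 + \<eta>^2 * ((\<Sum>t<T. N1 t) + lam^2 * (\<Sum>t<T. N2 t))) / \<eta>"
    using eta by (simp add: field_simps)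
  also have "\<dots> = D 0 / \<eta> + \<eta> * (\<Sum>t<T. N1 t) + \<eta> * lam^2 * (\<Sum>t<T. N2 t)"
    using eta by (simp add: field_simps power2_eq_square)
  finally show ?thesis unfolding I_def D_def N1_def N2_def X_def .
qed

lemma ln_mean:
  assumes T: "0 < T" and pos: "\<And>t. t < T \<Longrightarrow> 0 < A t"
  shows "(\<Sum>t<T. ln (A t)) \<le> real T * ln ((1 / real T) * (\<Sum>t<T. A t))"
proof -
  define m where "m = (1 / real T) * (\<Sum>t<T. A t)"
  have sp: "0 < (\<Sum>t<T. A t)" using T pos by (intro sum_pos) auto
  have mp: "0 < m" using sp T by (simp add: m_def)
  have "(\<Sum>t<T. ln (A t)) \<le> (\<Sum>t<T. ln m + (A t / m - 1))"
  proof (rule sum_mono)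
    fix t assume "t \<in> {..<T}"
    then have "0 < A t" using pos by simp
    then have "ln (A t / m) \<le> A t / m - 1" using mp by (intro ln_le_minus_one) simp
    then show "ln (A t) \<le> ln m + (A t / m - 1)" using mp \<open>0 < A t\<close> by (simp add: ln_div)
  qed
  also have "\<dots> = real T * ln m + ((\<Sum>t<T. A t) / m - real T)"
    by (simp add: sum.distrib sum_subtractf sum_divide_distrib)
  also have "(\<Sum>t<T. A t) / m = real T" using sp T by (simp add: m_def)
  finally show ?thesis by (simp add: m_def)
qed

lemma R_avg:
  assumes T: "0 < T" and pos: "\<And>t i. t < T \<Longrightarrow> 0 < X t i"
  shows "R_eps \<epsilon> (\<lambda>i. (1 / real T) * (\<Sum>t<T. X t i)) \<le> (1 / real T) * (\<Sum>t<T. R_eps \<epsilon> (X t :: 'k::finite \<Rightarrow> real))"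
proof -
  have lnp: "(1 / real T) * (\<Sum>t<T. ln (X t i)) \<le> ln ((1 / real T) * (\<Sum>t<T. X t i))" for i
  proof -
    have "(\<Sum>t<T. ln (X t i)) \<le> real T * ln ((1 / real T) * (\<Sum>t<T. X t i))"
      by (rule ln_mean[OF T]) (use pos in auto)
    then show ?thesis using T by (simp add: field_simps)
  qed
  have "(1 / real T) * (\<Sum>t<T. R_eps \<epsilon> (X t))
      = - (\<Sum>i\<in>UNIV. (1 / real T) * (\<Sum>t<T. ln (X t i))) + (1 / \<epsilon>) * (\<Sum>i\<in>UNIV. (1 / real T) * (\<Sum>t<T. X t i))"
  proof -
    have "(\<Sum>t<T. R_eps \<epsilon> (X t)) = - (\<Sum>t<T. \<Sum>i\<in>UNIV. ln (X t i)) + (1 / \<epsilon>) * (\<Sum>t<T. \<Sum>i\<in>UNIV. X t i)"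
      by (simp add: R_eps_def sum.distrib sum_negf sum_distrib_left sum_subtractf)
    also have "\<dots> = - (\<Sum>i\<in>UNIV. \<Sum>t<T. ln (X t i)) + (1 / \<epsilon>) * (\<Sum>i\<in>UNIV. \<Sum>t<T. X t i)"
      by (simp only: sum.swap[of _ "{..<T}"])
    finally have H: "(\<Sum>t<T. R_eps \<epsilon> (X t)) = - (\<Sum>i\<in>UNIV. \<Sum>t<T. ln (X t i)) + (1 / \<epsilon>) * (\<Sum>i\<in>UNIV. \<Sum>t<T. X t i)" .
    have "(1 / real T) * (\<Sum>t<T. R_eps \<epsilon> (X t)) = - ((1 / real T) * (\<Sum>i\<in>UNIV. \<Sum>t<T. ln (X t i))) + (1 / \<epsilon>) * ((1 / real T) * (\<Sum>i\<in>UNIV. \<Sum>t<T. X t i))"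
      unfolding H by (simp add: algebra_simps)
    then show ?thesis by (simp only: sum_distrib_left)
  qed
  moreover have "R_eps \<epsilon> (\<lambda>i. (1 / real T) * (\<Sum>t<T. X t i))
      = - (\<Sum>i\<in>UNIV. ln ((1 / real T) * (\<Sum>t<T. X t i))) + (1 / \<epsilon>) * (\<Sum>i\<in>UNIV. (1 / real T) * (\<Sum>t<T. X t i))"
    by (simp add: R_eps_def)
  moreover have "(\<Sum>i\<in>UNIV. (1 / real T) * (\<Sum>t<T. ln (X t i))) \<le> (\<Sum>i\<in>UNIV. ln ((1 / real T) * (\<Sum>t<T. X t i)))"
    by (rule sum_mono) (rule lnp)
  ultimately show ?thesis by linarith
qed

lemma R_grad:
  assumes xp: "\<And>i. 0 < x i" and yp: "\<And>i. 0 < y i"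
  shows "R_eps \<epsilon> x - R_eps \<epsilon> y \<le> inner_vec (grad_R_eps \<epsilon> x) (\<lambda>i. x i - (y::'k::finite \<Rightarrow> real) i)"
proof -
  have "R_eps \<epsilon> x - R_eps \<epsilon> y = (\<Sum>i\<in>UNIV. (ln (y i) - ln (x i)) + (1 / \<epsilon>) * (x i - y i))"
    by (simp add: R_eps_def sum.distrib sum_subtractf sum_distrib_left sum_divide_distrib algebra_simps)
  also have "\<dots> \<le> (\<Sum>i\<in>UNIV. (- 1 / x i + 1 / \<epsilon>) * (x i - y i))"
  proof (rule sum_mono)
    fix i
    have "ln (y i / x i) \<le> y i / x i - 1" using xp[of i] yp[of i] by (intro ln_le_minus_one) simp
    then have "ln (y i) - ln (x i) \<le> y i / x i - 1" using xp[of i] yp[of i] by (simp add: ln_div)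
    also have "y i / x i - 1 = - ((x i - y i) / x i)" using xp[of i] by (simp add: field_simps)
    finally have h: "ln (y i) - ln (x i) \<le> - ((x i - y i) / x i)" .
    have eq: "(- 1 / x i + 1 / \<epsilon>) * (x i - y i) = (x i - y i) / \<epsilon> - (x i - y i) / x i"
    proof -
      have "(x i - y i) / x i = 1 - y i / x i" using xp[of i] by (simp add: diff_divide_distrib)
      then show ?thesis by (simp add: ring_distribs diff_divide_distrib)
    qed
    show "(ln (y i) - ln (x i)) + (1 / \<epsilon>) * (x i - y i) \<le> (- 1 / x i + 1 / \<epsilon>) * (x i - y i)"
      unfolding eq using h by simp
  qed
  finally show ?thesis by (simp add: inner_vec_def grad_R_eps_def)
qed

lemma pathA:
  assumes T: "0 < T" and lam: "0 < lam" and pos: "\<And>t i. t < T \<Longrightarrow> 0 < X t i" and yp: "\<And>i. 0 < y i"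
  shows "f_obj \<mu> lam \<epsilon> (\<lambda>i. (1 / real T) * (\<Sum>t<T. X t i)) - f_obj \<mu> lam \<epsilon> y
    \<le> (1 / real T) * (\<Sum>t<T. inner_vec (\<lambda>i. \<mu> i + lam * grad_R_eps \<epsilon> (X t) i) (\<lambda>i. X t i - (y::'k::finite \<Rightarrow> real) i))"
proof -
  have lin: "inner_vec \<mu> (\<lambda>i. (1 / real T) * (\<Sum>t<T. X t i)) - inner_vec \<mu> y
      = (1 / real T) * (\<Sum>t<T. inner_vec \<mu> (\<lambda>i. X t i - y i))"
  proof -
    have "(\<Sum>t<T. inner_vec \<mu> (\<lambda>i. X t i - y i)) = (\<Sum>t<T. \<Sum>i\<in>UNIV. \<mu> i * X t i) - real T * inner_vec \<mu> y"
      by (simp add: inner_vec_def sum_subtractf right_diff_distrib)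
    also have "(\<Sum>t<T. \<Sum>i\<in>UNIV. \<mu> i * X t i) = (\<Sum>i\<in>UNIV. \<mu> i * (\<Sum>t<T. X t i))"
      by (simp only: sum.swap[of _ "{..<T}"] sum_distrib_left)
    finally have e2: "(\<Sum>t<T. inner_vec \<mu> (\<lambda>i. X t i - y i)) = (\<Sum>i\<in>UNIV. \<mu> i * (\<Sum>t<T. X t i)) - real T * inner_vec \<mu> y" .
    have e1: "inner_vec \<mu> (\<lambda>i. (1 / real T) * (\<Sum>t<T. X t i)) = (1 / real T) * (\<Sum>i\<in>UNIV. \<mu> i * (\<Sum>t<T. X t i))"
      unfolding inner_vec_def sum_distrib_left by (rule sum.cong) simp_all
    have "(1 / real T) * (\<Sum>t<T. inner_vec \<mu> (\<lambda>i. X t i - y i)) = (1 / real T) * (\<Sum>i\<in>UNIV. \<mu> i * (\<Sum>t<T. X t i)) - inner_vec \<mu> y"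
      unfolding e2 using T by (simp add: right_diff_distrib)
    then show ?thesis using e1 by simp
  qed
  have Ravg: "R_eps \<epsilon> (\<lambda>i. (1 / real T) * (\<Sum>t<T. X t i)) - R_eps \<epsilon> y \<le> (1 / real T) * (\<Sum>t<T. R_eps \<epsilon> (X t) - R_eps \<epsilon> y)"
    using R_avg[OF T pos] T by (simp add: sum_subtractf right_diff_distrib)
  have Rg: "(\<Sum>t<T. R_eps \<epsilon> (X t) - R_eps \<epsilon> y) \<le> (\<Sum>t<T. inner_vec (grad_R_eps \<epsilon> (X t)) (\<lambda>i. X t i - y i))"
    by (rule sum_mono) (rule R_grad, use pos yp in auto)
  have split: "inner_vec (\<lambda>i. \<mu> i + lam * grad_R_eps \<epsilon> (X t) i) (\<lambda>i. X t i - y i)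
       = inner_vec \<mu> (\<lambda>i. X t i - y i) + lam * inner_vec (grad_R_eps \<epsilon> (X t)) (\<lambda>i. X t i - y i)" for t
    by (simp add: inner_vec_def sum.distrib sum_distrib_left distrib_right mult.assoc)
  have "f_obj \<mu> lam \<epsilon> (\<lambda>i. (1 / real T) * (\<Sum>t<T. X t i)) - f_obj \<mu> lam \<epsilon> y
      = (1 / real T) * (\<Sum>t<T. inner_vec \<mu> (\<lambda>i. X t i - y i))
        + lam * (R_eps \<epsilon> (\<lambda>i. (1 / real T) * (\<Sum>t<T. X t i)) - R_eps \<epsilon> y)"
    using lin by (simp add: f_obj_def algebra_simps)
  also have "\<dots> \<le> (1 / real T) * (\<Sum>t<T. inner_vec \<mu> (\<lambda>i. X t i - y i))
        + lam * ((1 / real T) * (\<Sum>t<T. inner_vec (grad_R_eps \<epsilon> (X t)) (\<lambda>i. X t i - y i)))"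
  proof -
    have hR: "R_eps \<epsilon> (\<lambda>i. (1 / real T) * (\<Sum>t<T. X t i)) - R_eps \<epsilon> y
        \<le> (1 / real T) * (\<Sum>t<T. inner_vec (grad_R_eps \<epsilon> (X t)) (\<lambda>i. X t i - y i))"
      using Ravg mult_left_mono[OF Rg, of "1 / real T"] by simp
    have "lam * (R_eps \<epsilon> (\<lambda>i. (1 / real T) * (\<Sum>t<T. X t i)) - R_eps \<epsilon> y)
        \<le> lam * ((1 / real T) * (\<Sum>t<T. inner_vec (grad_R_eps \<epsilon> (X t)) (\<lambda>i. X t i - y i)))"
      by (rule mult_left_mono[OF hR]) (use lam in simp)
    then show ?thesis by (rule add_left_mono)
  qed
  also have "\<dots> = (1 / real T) * (\<Sum>t<T. inner_vec (\<lambda>i. \<mu> i + lam * grad_R_eps \<epsilon> (X t) i) (\<lambda>i. X t i - y i))"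
    by (simp add: split sum.distrib sum_distrib_left algebra_simps)
  finally show ?thesis .
qed

abbreviation LS :: "(nat \<Rightarrow> real) measure" where
  "LS \<equiv> Pi\<^sub>M (UNIV::nat set) (\<lambda>_. (borel::real measure))"

definition Hh :: "('k \<times> real) list \<Rightarrow> 'k list \<Rightarrow> (nat \<Rightarrow> real) \<Rightarrow> ('k \<times> real) list" where
  "Hh h js ls = h @ zip js (map ls [0..<length js])"

definition meas_all :: "(('k \<times> real) list \<Rightarrow> real) \<Rightarrow> bool" where
  "meas_all F = (\<forall>h js. (\<lambda>ls. F (Hh h js ls)) \<in> borel_measurable LS)"

lemma Hh_snoc: "Hh h (js @ [a]) ls = Hh h js ls @ [(a, ls (length js))]"
  by (simp add: Hh_def)

lemma Hh_Nil: "Hh h [] ls = h" by (simp add: Hh_def)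

lemma dpsi_meas[measurable]: "dpsi \<alpha> \<in> borel_measurable borel"
  unfolding dpsi_def by measurable

lemma NextG_apply:
  "NextG \<alpha> \<eta> lam \<epsilon> x a l j = (if \<alpha> = 1 \<or> 0 < x a powr (\<alpha> - 1) + (1 - \<alpha>) * \<eta> * (l / x a + lam * (- 1 / x a + 1 / \<epsilon>))
     then dpsi \<alpha> (x j) - \<eta> * ((if j = a then l / x a else 0) + lam * (- 1 / x j + 1 / \<epsilon>))
     else dpsi \<alpha> (cdflt j))"
  by (simp add: NextG_def condv_def qv_def ltv_def loss_est_def grad_R_eps_def grad_phi_eq)

lemma NextG_meas:
  assumes X[measurable]: "\<And>i. (\<lambda>ls. X ls i) \<in> borel_measurable M"
    and L[measurable]: "L \<in> borel_measurable M"
  shows "(\<lambda>ls. NextG \<alpha> \<eta> lam \<epsilon> (X ls :: 'k::finite \<Rightarrow> real) a (L ls)) \<in> borel_measurable M"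
proof (rule measurable_coordinatewise_then_product)
  fix j
  show "(\<lambda>ls. NextG \<alpha> \<eta> lam \<epsilon> (X ls) a (L ls) j) \<in> borel_measurable M"
    unfolding NextG_apply by measurable
qed

lemma x_of_meas:
  assumes a: "0 \<le> \<alpha>" "\<alpha> \<le> 1" and e: "0 < \<epsilon>" "real CARD('k::finite) * \<epsilon> \<le> 1"
    and lam: "0 < lam" and eta: "0 < \<eta>"
  shows "(\<lambda>ls. x_of \<alpha> \<eta> lam \<epsilon> (Hh h js ls) :: 'k \<Rightarrow> real) \<in> borel_measurable LS"
proof (induction js rule: rev_induct)
  case Nil
  then show ?case by (simp add: Hh_Nil)
next
  case (snoc a js)
  have c: "PiG \<alpha> \<epsilon> \<in> borel_measurable (borel :: ('k \<Rightarrow> real) measure)"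
    by (rule borel_measurable_continuous_onI[OF PiG_cont[OF a e]])
  have comp[measurable]: "(\<lambda>ls. x_of \<alpha> \<eta> lam \<epsilon> (Hh h js ls) i) \<in> borel_measurable LS" for i
    using measurable_product_then_coordinatewise[OF snoc.IH] .
  have n: "(\<lambda>ls. NextG \<alpha> \<eta> lam \<epsilon> (x_of \<alpha> \<eta> lam \<epsilon> (Hh h js ls)) a (ls (length js))) \<in> borel_measurable LS"
    by (rule NextG_meas) measurable
  have "(\<lambda>ls. PiG \<alpha> \<epsilon> (NextG \<alpha> \<eta> lam \<epsilon> (x_of \<alpha> \<eta> lam \<epsilon> (Hh h js ls)) a (ls (length js)))) \<in> borel_measurable LS"
    by (rule measurable_compose[OF n c])
  then show ?case by (simp add: Hh_snoc x_of_snoc[OF a e lam eta])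
qed

lemma take_upt0: "take k [0..<n] = [0..<min k n]"
  by (cases "k \<le> n") (simp_all add: min_def take_upt)

lemma take_Hh: "take t (Hh h js ls) = (if t \<le> length h then take t h else Hh h (take (t - length h) js) ls)"
proof (cases "t \<le> length h")
  case True
  then show ?thesis by (simp add: Hh_def)
next
  case False
  define k where "k = t - length h"
  have "take t (Hh h js ls) = h @ take k (zip js (map ls [0..<length js]))"
    using False by (simp add: Hh_def k_def)
  also have "take k (zip js (map ls [0..<length js])) = zip (take k js) (map ls [0..<length (take k js)])"
    by (simp only: take_zip take_map take_upt0 length_take min.commute)
  finally show ?thesis using False by (simp add: Hh_def k_def)
qed

lemma nth_beyond: "length zs \<le> k \<Longrightarrow> zs ! k = [] ! (k - length zs)"
proof (induction zs arbitrary: k)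
  case Nil then show ?case by simp
next
  case (Cons z zs)
  then obtain k' where "k = Suc k'" by (cases k) auto
  then show ?case using Cons by simp
qed

lemma nth_Hh: "Hh h js ls ! t = (if t < length h then h ! t else if t < length h + length js
     then (js ! (t - length h), ls (t - length h)) else [] ! (t - length h - length js))"
proof -
  define zs where "zs = zip js (map ls [0..<length js])"
  have lz: "length zs = length js" by (simp add: zs_def)
  have "Hh h js ls ! t = (if t < length h then h ! t else zs ! (t - length h))"
    by (simp add: Hh_def zs_def nth_append)
  moreover have "zs ! k = (js ! k, ls k)" if "k < length js" for k
    using that by (simp add: zs_def)
  moreover have "zs ! k = [] ! (k - length js)" if "length js \<le> k" for k
    using nth_beyond[of zs k] that lz by simp
  ultimately show ?thesis by (simp add: diff_diff_add)
qed

lemma x_round_meas: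
  assumes a: "0 \<le> \<alpha>" "\<alpha> \<le> 1" and e: "0 < \<epsilon>" "real CARD('k::finite) * \<epsilon> \<le> 1"
    and lam: "0 < lam" and eta: "0 < \<eta>"
  shows "(\<lambda>ls. x_round \<alpha> \<eta> lam \<epsilon> (Hh h js ls) t (i::'k)) \<in> borel_measurable LS"
proof (cases "t \<le> length h")
  case True
  then show ?thesis by (simp add: x_round_def take_Hh)
next
  case False
  then show ?thesis unfolding x_round_def take_Hh using False
    by (simp add: measurable_product_then_coordinatewise[OF x_of_meas[OF a e lam eta]])
qed

lemma lhat_round_meas:
  assumes a: "0 \<le> \<alpha>" "\<alpha> \<le> 1" and e: "0 < \<epsilon>" "real CARD('k::finite) * \<epsilon> \<le> 1"
    and lam: "0 < lam" and eta: "0 < \<eta>"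
  shows "(\<lambda>ls. lhat_round \<alpha> \<eta> lam \<epsilon> (Hh h js ls) t (i::'k)) \<in> borel_measurable LS"
proof -
  note xm[measurable] = x_round_meas[OF a e lam eta]
  define a0 where "a0 = fst (Hh h js (\<lambda>_. 0) ! t)"
  have a0: "\<And>ls. fst (Hh h js ls ! t) = a0" unfolding a0_def by (simp add: nth_Hh)
  have "(\<lambda>ls. snd (Hh h js ls ! t)) \<in> borel_measurable LS"
    by (cases "t < length h"; cases "t < length h + length js") (simp_all add: nth_Hh)
  note [measurable] = this
  show ?thesis unfolding lhat_round_def loss_est_def a0 by measurable
qed

definition bndN :: "nat \<Rightarrow> (('k \<times> real) list \<Rightarrow> real) \<Rightarrow> bool" where
  "bndN N F = (\<exists>B\<ge>0. \<forall>h. goodh h \<and> length h = N \<longrightarrow> \<bar>F h\<bar> \<le> B)"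

lemma int_abs_bound:
  fixes f :: "real \<Rightarrow> real"
  assumes M: "prob_space M" and ae: "AE x in M. \<bar>f x\<bar> \<le> B" and B: "0 \<le> B"
  shows "\<bar>\<integral>x. f x \<partial>M\<bar> \<le> B"
proof (cases "integrable M f")
  case True
  interpret prob_space M by (rule M)
  have i: "integrable M (\<lambda>_. B)" "integrable M (\<lambda>_. - B)" by auto
  have "(\<integral>x. f x \<partial>M) \<le> (\<integral>x. B \<partial>M)"
    by (rule integral_mono_AE[OF True i(1)]) (use ae in \<open>auto elim: AE_mp\<close>)
  moreover have "(\<integral>x. - B \<partial>M) \<le> (\<integral>x. f x \<partial>M)"
    by (rule integral_mono_AE[OF i(2) True]) (use ae in \<open>auto elim: AE_mp\<close>)
  ultimately show ?thesis by (simp add: prob_space)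
next
  case False
  then show ?thesis using B by (simp add: not_integrable_integral_eq)
qed

lemma meas_all_add: "meas_all F \<Longrightarrow> meas_all G \<Longrightarrow> meas_all (\<lambda>h. F h + G h)"
  unfolding meas_all_def by (auto intro!: borel_measurable_add)

lemma meas_all_mult: "meas_all F \<Longrightarrow> meas_all (\<lambda>h. c * F h)"
  unfolding meas_all_def by (auto intro!: borel_measurable_times)

locale hset =
  fixes P :: "'k::finite \<Rightarrow> real measure" and pol :: "('k \<times> real) list \<Rightarrow> 'k \<Rightarrow> real"
  assumes P_prob: "\<And>a. prob_space (P a)" and P_sets: "\<And>a. sets (P a) = sets borel"
    and P_supp: "\<And>a. AE l in P a. l \<in> {0..1}"
    and pol_nn: "\<And>h j. 0 \<le> pol h j" and pol_sum: "\<And>h. (\<Sum>j\<in>UNIV. pol h j) = 1"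
    and pol_meas: "\<And>j. meas_all (\<lambda>h. pol h j)"
begin

abbreviation HE where "HE \<equiv> hist_exp P pol"

lemma meas_snoc:
  assumes "meas_all G"
  shows "(\<lambda>l. G (h @ [(j, l::real)])) \<in> borel_measurable (P j)"
proof -
  have g: "(\<lambda>ls. G (Hh h [j] ls)) \<in> borel_measurable LS" using assms by (simp add: meas_all_def)
  have c: "(\<lambda>l. (\<lambda>_::nat. l)) \<in> measurable (P j) LS"
    by (rule measurable_PiM_single') (auto intro: measurable_ident_sets[OF P_sets])
  have "(\<lambda>l. G (Hh h [j] (\<lambda>_. l))) \<in> borel_measurable (P j)"
    using measurable_compose[OF c g] .
  then show ?thesis by (simp add: Hh_def)
qed

lemma hist_meas:
  assumes "meas_all F"
  shows "meas_all (HE n F)"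
proof (induction n)
  case 0
  then show ?case using assms by (simp add: meas_all_def)
next
  case (Suc n)
  show ?case unfolding meas_all_def
  proof (intro allI)
    fix h :: "('k \<times> real) list" and js :: "'k list"
    define k where "k = length js"
    have int: "(\<lambda>ls. \<integral>l. HE n F (Hh h js ls @ [(j, l::real)]) \<partial>P j) \<in> borel_measurable LS" for j
    proof -
      interpret sigma_finite_measure "P j" using prob_space_imp_sigma_finite[OF P_prob] .
      have upd: "(\<lambda>p. (fst p)(k := snd p)) \<in> measurable (LS \<Otimes>\<^sub>M P j) LS"
      proof (rule measurable_PiM_single')
        fix i :: nat
        show "(\<lambda>p. ((fst p)(k := snd p)) i) \<in> measurable (LS \<Otimes>\<^sub>M P j) borel"
        proof (cases "i = k")
          case True
          have "(\<lambda>p. snd p) \<in> measurable (LS \<Otimes>\<^sub>M P j) (P j)" by (rule measurable_snd)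
          then have "(\<lambda>p. snd p) \<in> measurable (LS \<Otimes>\<^sub>M P j) borel"
            using measurable_cong_sets[OF refl P_sets] by blast
          then show ?thesis using True by simp
        next
          case False
          have "(\<lambda>p. fst p i) \<in> measurable (LS \<Otimes>\<^sub>M P j) borel" by measurable
          then show ?thesis using False by simp
        qed
      qed simp
      have g: "(\<lambda>ls. HE n F (Hh h (js @ [j]) ls)) \<in> borel_measurable LS"
        using Suc.IH by (simp add: meas_all_def)
      have eq: "Hh h (js @ [j]) ((fst p)(k := snd p)) = Hh h js (fst p) @ [(j, snd p)]" for p
      proof -
        have "map ((fst p)(k := snd p)) [0..<k] = map (fst p) [0..<k]" by simp
        then show ?thesis by (simp add: Hh_snoc k_def Hh_def)
      qed
      have "(\<lambda>p. HE n F (Hh h (js @ [j]) ((fst p)(k := snd p)))) \<in> borel_measurable (LS \<Otimes>\<^sub>M P j)"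
        using measurable_compose[OF upd g] .
      then have "case_prod (\<lambda>ls l. HE n F (Hh h js ls @ [(j, l::real)])) \<in> borel_measurable (LS \<Otimes>\<^sub>M P j)"
        by (simp add: eq case_prod_beta')
      then show ?thesis by (rule borel_measurable_lebesgue_integral)
    qed
    have pm: "(\<lambda>ls. pol (Hh h js ls) j) \<in> borel_measurable LS" for j
      using pol_meas[of j] by (simp add: meas_all_def)
    show "(\<lambda>ls. HE (Suc n) F (Hh h js ls)) \<in> borel_measurable LS"
      by (simp, intro borel_measurable_sum borel_measurable_times pm int)
  qed
qed

lemma hist_bound:
  assumes "\<And>h'. goodh h' \<Longrightarrow> length h' = length h + n \<Longrightarrow> \<bar>F h'\<bar> \<le> B" and "goodh h" and "0 \<le> B"
  shows "\<bar>HE n F h\<bar> \<le> B"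
  using assms(1,2)
proof (induction n arbitrary: h)
  case 0
  then show ?case by simp
next
  case (Suc n)
  have ib: "\<bar>\<integral>l. HE n F (h @ [(j, l::real)]) \<partial>P j\<bar> \<le> B" for j
  proof (rule int_abs_bound[OF P_prob _ assms(3)])
    show "AE l in P j. \<bar>HE n F (h @ [(j, l::real)])\<bar> \<le> B"
      using P_supp[of j]
    proof (rule AE_mp, intro AE_I2 impI)
      fix l :: real assume "l \<in> {0..1}"
      then have g: "goodh (h @ [(j, l::real)])" using Suc.prems(2) by (auto simp: goodh_def)
      show "\<bar>HE n F (h @ [(j, l::real)])\<bar> \<le> B"
        by (rule Suc.IH[OF _ g]) (use Suc.prems(1) in simp)
    qed
  qed
  have "\<bar>HE (Suc n) F h\<bar> \<le> (\<Sum>j\<in>UNIV. \<bar>pol h j * (\<integral>l. HE n F (h @ [(j, l::real)]) \<partial>P j)\<bar>)"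
    by (simp only: hist_exp.simps sum_abs)
  also have "\<dots> \<le> (\<Sum>j\<in>UNIV. pol h j * B)"
    by (rule sum_mono) (simp add: abs_mult pol_nn mult_left_mono ib)
  also have "\<dots> = B" by (simp add: sum_distrib_right[symmetric] pol_sum)
  finally show ?case .
qed

lemma hist_integrable:
  assumes m: "meas_all F" and b: "bndN N F" and g: "goodh h" and len: "length h + Suc n = N"
  shows "integrable (P j) (\<lambda>l. HE n F (h @ [(j, l::real)]))"
proof -
  obtain B where B: "0 \<le> B" "\<And>h. goodh h \<Longrightarrow> length h = N \<Longrightarrow> \<bar>F h\<bar> \<le> B"
    using b unfolding bndN_def by blast
  interpret prob_space "P j" by (rule P_prob)
  show ?thesis
  proof (rule integrable_const_bound[where B = B])
    show "AE l in P j. norm (HE n F (h @ [(j, l::real)])) \<le> B"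
      using P_supp[of j]
    proof (rule AE_mp, intro AE_I2 impI)
      fix l :: real assume "l \<in> {0..1}"
      then have g': "goodh (h @ [(j, l::real)])" using g by (auto simp: goodh_def)
      show "norm (HE n F (h @ [(j, l::real)])) \<le> B"
        using hist_bound[OF _ g' B(1), of n F] B(2) len by simp
    qed
    show "(\<lambda>l. HE n F (h @ [(j, l::real)])) \<in> borel_measurable (P j)"
      by (rule meas_snoc[OF hist_meas[OF m]])
  qed
qed

lemma hist_mono:
  assumes mF: "meas_all F" and mG: "meas_all G" and bF: "bndN N F" and bG: "bndN N G"
    and le: "\<And>h'. goodh h' \<Longrightarrow> length h' = N \<Longrightarrow> F h' \<le> G h'"
  shows "goodh h \<Longrightarrow> length h + n = N \<Longrightarrow> HE n F h \<le> HE n G h"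
proof (induction n arbitrary: h)
  case 0
  then show ?case using le by simp
next
  case (Suc n)
  have "(\<integral>l. HE n F (h @ [(j, l::real)]) \<partial>P j) \<le> (\<integral>l. HE n G (h @ [(j, l::real)]) \<partial>P j)" for j
  proof (rule integral_mono_AE)
    show "integrable (P j) (\<lambda>l. HE n F (h @ [(j, l::real)]))" by (rule hist_integrable[OF mF bF Suc.prems])
    show "integrable (P j) (\<lambda>l. HE n G (h @ [(j, l::real)]))" by (rule hist_integrable[OF mG bG Suc.prems])
    show "AE l in P j. HE n F (h @ [(j, l::real)]) \<le> HE n G (h @ [(j, l::real)])"
      using P_supp[of j]
    proof (rule AE_mp, intro AE_I2 impI)
      fix l :: real assume "l \<in> {0..1}"
      then have g': "goodh (h @ [(j, l::real)])" using Suc.prems(1) by (auto simp: goodh_def)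
      show "HE n F (h @ [(j, l::real)]) \<le> HE n G (h @ [(j, l::real)])"
        by (rule Suc.IH[OF g']) (use Suc.prems(2) in simp)
    qed
  qed
  then show ?case by (simp only: hist_exp.simps) (intro sum_mono mult_left_mono pol_nn)
qed

lemma hist_add:
  assumes mF: "meas_all F" and mG: "meas_all G" and bF: "bndN N F" and bG: "bndN N G"
  shows "goodh h \<Longrightarrow> length h + n = N \<Longrightarrow> HE n (\<lambda>h. F h + G h) h = HE n F h + HE n G h"
proof (induction n arbitrary: h)
  case 0
  then show ?case by simp
next
  case (Suc n)
  have "(\<integral>l. HE n (\<lambda>h. F h + G h) (h @ [(j, l::real)]) \<partial>P j)
      = (\<integral>l. HE n F (h @ [(j, l::real)]) \<partial>P j) + (\<integral>l. HE n G (h @ [(j, l::real)]) \<partial>P j)" for j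
  proof -
    have "(\<integral>l. HE n (\<lambda>h. F h + G h) (h @ [(j, l::real)]) \<partial>P j)
        = (\<integral>l. HE n F (h @ [(j, l::real)]) + HE n G (h @ [(j, l::real)]) \<partial>P j)"
    proof (rule integral_cong_AE)
      show "(\<lambda>l. HE n (\<lambda>h. F h + G h) (h @ [(j, l::real)])) \<in> borel_measurable (P j)"
        by (rule meas_snoc[OF hist_meas[OF meas_all_add[OF mF mG]]])
      show "(\<lambda>l. HE n F (h @ [(j, l::real)]) + HE n G (h @ [(j, l::real)])) \<in> borel_measurable (P j)"
        using meas_snoc[OF hist_meas[OF mF]] meas_snoc[OF hist_meas[OF mG]] by simp
      show "AE l in P j. HE n (\<lambda>h. F h + G h) (h @ [(j, l::real)]) = HE n F (h @ [(j, l::real)]) + HE n G (h @ [(j, l::real)])"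
        using P_supp[of j]
      proof (rule AE_mp, intro AE_I2 impI)
        fix l :: real assume "l \<in> {0..1}"
        then have g': "goodh (h @ [(j, l::real)])" using Suc.prems(1) by (auto simp: goodh_def)
        show "HE n (\<lambda>h. F h + G h) (h @ [(j, l::real)]) = HE n F (h @ [(j, l::real)]) + HE n G (h @ [(j, l::real)])"
          by (rule Suc.IH[OF g']) (use Suc.prems(2) in simp)
      qed
    qed
    also have "\<dots> = (\<integral>l. HE n F (h @ [(j, l::real)]) \<partial>P j) + (\<integral>l. HE n G (h @ [(j, l::real)]) \<partial>P j)"
      by (rule Bochner_Integration.integral_add)
         (rule hist_integrable[OF mF bF Suc.prems], rule hist_integrable[OF mG bG Suc.prems])
    finally show ?thesis .
  qed
  then show ?case by (simp add: distrib_left sum.distrib)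
qed

lemma hist_cmult: "HE n (\<lambda>h. c * F h) h = c * HE n F h"
proof (induction n arbitrary: h)
  case 0
  then show ?case by simp
next
  case (Suc n)
  then show ?case by (simp add: sum_distrib_left mult.left_commute)
qed

lemma hist_const:
  assumes "\<And>h'. F (h @ h') = F h"
  shows "HE n F h = F h"
  using assms
proof (induction n arbitrary: h)
  case 0
  then show ?case by simp
next
  case (Suc n)
  have "HE n F (h @ [(j, l::real)]) = F h" for j l
  proof -
    have "HE n F (h @ [(j, l::real)]) = F (h @ [(j, l::real)])"
      by (rule Suc.IH) (metis Suc.prems append_assoc)
    then show ?thesis using Suc.prems[of "[(j, l::real)]"] by simp
  qed
  then have "HE (Suc n) F h = (\<Sum>j\<in>UNIV. pol h j * (\<integral>l. F h \<partial>P j))" by simp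
  also have "\<dots> = (\<Sum>j\<in>UNIV. pol h j * F h)"
    by (simp add: prob_space.prob_space[OF P_prob])
  also have "\<dots> = F h" by (simp add: sum_distrib_right[symmetric] pol_sum)
  finally show ?case .
qed

end

lemma abs_sum_bound:
  assumes "finite S" "\<And>x. x \<in> S \<Longrightarrow> \<bar>f x\<bar> \<le> (c::real)"
  shows "\<bar>sum f S\<bar> \<le> real (card S) * c"
proof -
  have "\<bar>sum f S\<bar> \<le> sum (\<lambda>x. \<bar>f x\<bar>) S" by (rule sum_abs)
  also have "\<dots> \<le> sum (\<lambda>_. c) S" by (rule sum_mono) (rule assms(2))
  finally show ?thesis by simp
qed

lemma abs_mult_bound: "\<bar>a\<bar> \<le> A \<Longrightarrow> \<bar>b\<bar> \<le> B \<Longrightarrow> \<bar>a * b\<bar> \<le> A * (B::real)"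
  by (simp add: abs_mult mult_mono')

locale alg =
  fixes P :: "'k::finite \<Rightarrow> real measure" and \<alpha> \<eta> lam \<epsilon> :: real and y \<mu> :: "'k \<Rightarrow> real"
  assumes P_prob: "\<And>a. prob_space (P a)" and P_sets: "\<And>a. sets (P a) = sets borel"
    and P_supp: "\<And>a. AE l in P a. l \<in> {0..1}"
    and a0: "0 \<le> \<alpha>" and a1: "\<alpha> \<le> 1" and eta: "0 < \<eta>" and lam: "0 < lam"
    and e0: "0 < \<epsilon>" and e1: "real CARD('k) * \<epsilon> \<le> 1" and y: "y \<in> trunc_simplex \<epsilon>"
    and mu_def: "\<mu> = (\<lambda>a. \<integral>l. l \<partial>P a)"
begin

abbreviation X :: "('k \<times> real) list \<Rightarrow> nat \<Rightarrow> 'k \<Rightarrow> real" where "X \<equiv> x_round \<alpha> \<eta> lam \<epsilon>"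
abbreviation Lh :: "('k \<times> real) list \<Rightarrow> nat \<Rightarrow> 'k \<Rightarrow> real" where "Lh \<equiv> lhat_round \<alpha> \<eta> lam \<epsilon>"

lemma xof_in: "x_of \<alpha> \<eta> lam \<epsilon> (h::('k \<times> real) list) \<in> trunc_simplex \<epsilon>"
  by (rule x_of_in[OF e0 e1])

lemma xr_b: "\<epsilon> \<le> X h t i" "X h t i \<le> 1" "0 < X h t i"
  using simplex_bounds[OF xof_in e0] by (auto simp: x_round_def)

lemma y_b: "\<epsilon> \<le> y i" "y i \<le> 1" "0 < y i"
  using simplex_bounds[OF y e0] by auto

lemma lh_b:
  assumes "goodh h" "t < length h"
  shows "0 \<le> Lh h t i" "Lh h t i \<le> 1 / \<epsilon>"
proof -
  obtain a l where p: "h ! t = (a, l)" by (cases "h ! t")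
  have "h ! t \<in> set h" using assms by simp
  then have l: "0 \<le> l" "l \<le> 1" using assms p by (auto simp: goodh_def)
  have x: "\<epsilon> \<le> X h t a" "0 < X h t a" using xr_b by auto
  have "l / X h t a \<le> 1 / X h t a" using l x by (simp add: divide_right_mono)
  also have "\<dots> \<le> 1 / \<epsilon>" using x e0 by (simp add: divide_left_mono)
  finally have "l / X h t a \<le> 1 / \<epsilon>" .
  then show "0 \<le> Lh h t i" "Lh h t i \<le> 1 / \<epsilon>"
    using l x e0 by (auto simp: lhat_round_def loss_est_def p)
qed

lemma gR_b: "0 \<le> grad_R_eps \<epsilon> (X h t) i" "grad_R_eps \<epsilon> (X h t) i \<le> 1 / \<epsilon>"
proof -
  have "1 / X h t i \<le> 1 / \<epsilon>" using xr_b e0 by (simp add: divide_left_mono)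
  moreover have "0 < 1 / X h t i" using xr_b by simp
  ultimately show "0 \<le> grad_R_eps \<epsilon> (X h t) i" "grad_R_eps \<epsilon> (X h t) i \<le> 1 / \<epsilon>"
    by (auto simp: grad_R_eps_def)
qed

lemma mu_b: "0 \<le> \<mu> i" "\<mu> i \<le> 1"
proof -
  interpret prob_space "P i" by (rule P_prob)
  have "\<bar>\<mu> i\<bar> \<le> 1" unfolding mu_def
    by (rule int_abs_bound[OF P_prob]) (use P_supp[of i] in \<open>auto elim: AE_mp\<close>)
  moreover have "0 \<le> \<mu> i" unfolding mu_def
    by (rule integral_nonneg_AE) (use P_supp[of i] in \<open>auto elim: AE_mp\<close>)
  ultimately show "0 \<le> \<mu> i" "\<mu> i \<le> 1" by auto
qed

lemma xr_meas[measurable]: "(\<lambda>ls. X (Hh h js ls) t i) \<in> borel_measurable LS"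
  by (rule x_round_meas[OF a0 a1 e0 e1 lam eta])

lemma lh_meas[measurable]: "(\<lambda>ls. Lh (Hh h js ls) t i) \<in> borel_measurable LS"
  by (rule lhat_round_meas[OF a0 a1 e0 e1 lam eta])

lemma pol_nn': "0 \<le> x_of \<alpha> \<eta> lam \<epsilon> (h::('k \<times> real) list) j"
  using simplex_bounds[OF xof_in e0] by (simp add: less_imp_le)

lemma pol_sum': "(\<Sum>j\<in>UNIV. x_of \<alpha> \<eta> lam \<epsilon> (h::('k \<times> real) list) j) = 1"
  using xof_in by (simp add: trunc_simplex_def)

lemma pol_meas': "meas_all (\<lambda>h::('k \<times> real) list. x_of \<alpha> \<eta> lam \<epsilon> h j)"
  unfolding meas_all_def
  using measurable_product_then_coordinatewise[OF x_of_meas[OF a0 a1 e0 e1 lam eta]] by blast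

sublocale hset P "x_of \<alpha> \<eta> lam \<epsilon>"
proof (rule hset.intro)
  show "\<And>a. prob_space (P a)" by (rule P_prob)
  show "\<And>a. sets (P a) = sets borel" by (rule P_sets)
  show "\<And>a. AE l in P a. l \<in> {0..1}" by (rule P_supp)
  show "\<And>(h::('k \<times> real) list) j. 0 \<le> x_of \<alpha> \<eta> lam \<epsilon> h j" using pol_nn' by blast
  show "\<And>h::('k \<times> real) list. (\<Sum>j\<in>UNIV. x_of \<alpha> \<eta> lam \<epsilon> h j) = 1" using pol_sum' by blast
  show "\<And>j::'k. meas_all (\<lambda>h. x_of \<alpha> \<eta> lam \<epsilon> h j)" using pol_meas' by blast
qed

definition Mt :: "nat \<Rightarrow> ('k \<times> real) list \<Rightarrow> real" where
  "Mt t h = inner_vec (\<lambda>i. \<mu> i - Lh h t i) (\<lambda>i. X h t i - y i)"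

lemma Mt_meas: "meas_all (\<lambda>h. \<Sum>t\<in>S. Mt t h)"
  unfolding meas_all_def Mt_def inner_vec_def by (intro allI) measurable

lemma Mt_b:
  assumes g: "goodh (h::('k \<times> real) list)" "t < length h"
  shows "\<bar>Mt t h\<bar> \<le> real CARD('k) * (1 + 1 / \<epsilon>)"
proof -
  have b: "\<bar>(\<mu> i - Lh h t i) * (X h t i - y i)\<bar> \<le> 1 + 1 / \<epsilon>" for i
  proof -
  have "\<bar>\<mu> i - Lh h t i\<bar> \<le> 1 + 1 / \<epsilon>" using mu_b[of i] lh_b[OF g, of i] e0 by (simp add: abs_le_iff)
  moreover have "\<bar>X h t i - y i\<bar> \<le> 1" using xr_b[of h t i] y_b[of i] by (simp add: abs_le_iff)
  ultimately show "\<bar>(\<mu> i - Lh h t i) * (X h t i - y i)\<bar> \<le> 1 + 1 / \<epsilon>"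
    using abs_mult_bound by fastforce
  qed
  have "\<bar>\<Sum>i\<in>UNIV. (\<mu> i - Lh h t i) * (X h t i - y i)\<bar> \<le> real (card (UNIV::'k set)) * (1 + 1 / \<epsilon>)"
    by (rule abs_sum_bound) (simp_all add: b)
  then show ?thesis by (simp add: Mt_def inner_vec_def)
qed

lemma Msum_b: "bndN N (\<lambda>h. \<Sum>t\<in>{a..<N}. Mt t h)"
  unfolding bndN_def
proof (intro exI conjI allI impI)
  show "0 \<le> real N * (real CARD('k) * (1 + 1 / \<epsilon>))" using e0 by simp
  fix h :: "('k \<times> real) list" assume h: "goodh h \<and> length h = N"
  have "\<bar>\<Sum>t\<in>{a..<N}. Mt t h\<bar> \<le> real (card {a..<N}) * (real CARD('k) * (1 + 1 / \<epsilon>))"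
    by (rule abs_sum_bound) (use h Mt_b in auto)
  also have "\<dots> \<le> real N * (real CARD('k) * (1 + 1 / \<epsilon>))"
    by (rule mult_right_mono) (use e0 in auto)
  finally show "\<bar>\<Sum>t\<in>{a..<N}. Mt t h\<bar> \<le> real N * (real CARD('k) * (1 + 1 / \<epsilon>))" .
qed

lemma Mt_single_b: "bndN N (Mt a)" if "a < N"
  unfolding bndN_def
proof (intro exI conjI allI impI)
  show "0 \<le> real CARD('k) * (1 + 1 / \<epsilon>)" using e0 by simp
  fix h :: "('k \<times> real) list" assume "goodh h \<and> length h = N"
  then show "\<bar>Mt a h\<bar> \<le> real CARD('k) * (1 + 1 / \<epsilon>)" using Mt_b that by auto
qed

lemma Mt_const: "length h > t \<Longrightarrow> Mt t (h @ h') = Mt t h"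
  by (simp add: Mt_def x_round_def lhat_round_def nth_append)

lemma Mt_snoc:
  assumes "length h = k"
  shows "Mt k (h @ [(j, l)]) = inner_vec \<mu> (\<lambda>i. x_of \<alpha> \<eta> lam \<epsilon> h i - y i)
      - l * ((x_of \<alpha> \<eta> lam \<epsilon> h j - y j) / x_of \<alpha> \<eta> lam \<epsilon> h j)"
proof -
  have "Mt k (h @ [(j, l)]) = (\<Sum>i\<in>UNIV. (\<mu> i - loss_est (x_of \<alpha> \<eta> lam \<epsilon> h) j l i) * (x_of \<alpha> \<eta> lam \<epsilon> h i - y i))"
    unfolding assms[symmetric] by (simp add: Mt_def inner_vec_def x_round_def lhat_round_def)
  also have "\<dots> = (\<Sum>i\<in>UNIV. \<mu> i * (x_of \<alpha> \<eta> lam \<epsilon> h i - y i))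
      - (\<Sum>i\<in>UNIV. loss_est (x_of \<alpha> \<eta> lam \<epsilon> h) j l i * (x_of \<alpha> \<eta> lam \<epsilon> h i - y i))"
    by (simp add: sum_subtractf[symmetric] left_diff_distrib)
  also have "(\<Sum>i\<in>UNIV. loss_est (x_of \<alpha> \<eta> lam \<epsilon> h) j l i * (x_of \<alpha> \<eta> lam \<epsilon> h i - y i))
      = l * ((x_of \<alpha> \<eta> lam \<epsilon> h j - y j) / x_of \<alpha> \<eta> lam \<epsilon> h j)"
  proof -
    have "(\<lambda>i. loss_est (x_of \<alpha> \<eta> lam \<epsilon> h) j l i * (x_of \<alpha> \<eta> lam \<epsilon> h i - y i))
        = (\<lambda>i. if i = j then l / x_of \<alpha> \<eta> lam \<epsilon> h j * (x_of \<alpha> \<eta> lam \<epsilon> h j - y j) else 0)"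
      by (auto simp: loss_est_def fun_eq_iff)
    then show ?thesis by (simp only:) simp
  qed
  finally show ?thesis by (simp add: inner_vec_def)
qed

lemma id_integrable: "integrable (P j) (\<lambda>l. l)"
proof -
  interpret prob_space "P j" by (rule P_prob)
  show ?thesis
  proof (rule integrable_const_bound[where B = 1])
    show "AE l in P j. norm l \<le> 1" using P_supp[of j] by (auto elim: AE_mp)
    show "(\<lambda>l. l) \<in> borel_measurable (P j)" using measurable_ident_sets[OF P_sets] by blast
  qed
qed

lemma mart:
  "goodh h \<Longrightarrow> length h + n = N \<Longrightarrow> HE n (\<lambda>h'. \<Sum>t\<in>{length h..<N}. Mt t h') h = 0"
proof (induction n arbitrary: h)
  case 0
  then show ?case by simp
next
  case (Suc n)
  define k where "k = length h"
  have kN: "k < N" using Suc.prems k_def by simp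
  define x where "x = x_of \<alpha> \<eta> lam \<epsilon> h"
  define c where "c = inner_vec \<mu> (\<lambda>i. x i - y i)"
  have xp: "0 < x i" for i using simplex_bounds[OF xof_in e0] by (simp add: x_def)
  have F_eq: "(\<lambda>h'. \<Sum>t\<in>{k..<N}. Mt t h') = (\<lambda>h'. Mt k h' + (\<Sum>t\<in>{Suc k..<N}. Mt t h'))"
    using kN by (simp add: sum.atLeast_Suc_lessThan)
  have int_eq: "(\<integral>l. HE n (\<lambda>h'. \<Sum>t\<in>{k..<N}. Mt t h') (h @ [(j, l::real)]) \<partial>P j)
      = c - \<mu> j * ((x j - y j) / x j)" for j
  proof -
    have "(\<integral>l. HE n (\<lambda>h'. \<Sum>t\<in>{k..<N}. Mt t h') (h @ [(j, l::real)]) \<partial>P j)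
        = (\<integral>l. c - l * ((x j - y j) / x j) \<partial>P j)"
    proof (rule integral_cong_AE)
      show "(\<lambda>l. HE n (\<lambda>h'. \<Sum>t\<in>{k..<N}. Mt t h') (h @ [(j, l::real)])) \<in> borel_measurable (P j)"
        by (rule meas_snoc[OF hist_meas[OF Mt_meas]])
      show "(\<lambda>l. c - l * ((x j - y j) / x j)) \<in> borel_measurable (P j)"
        using measurable_ident_sets[OF P_sets, of j] by measurable
      show "AE l in P j. HE n (\<lambda>h'. \<Sum>t\<in>{k..<N}. Mt t h') (h @ [(j, l)]) = c - l * ((x j - y j) / x j)"
        using P_supp[of j]
      proof (rule AE_mp, intro AE_I2 impI)
        fix l :: real assume "l \<in> {0..1}"
        then have g': "goodh (h @ [(j, l)])" using Suc.prems(1) by (auto simp: goodh_def)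
        have len': "length (h @ [(j, l)]) + n = N" using Suc.prems(2) by simp
        have m1: "meas_all (Mt k)" using Mt_meas[of "{k}"] by simp
        have "HE n (\<lambda>h'. \<Sum>t\<in>{k..<N}. Mt t h') (h @ [(j, l)])
            = HE n (Mt k) (h @ [(j, l)]) + HE n (\<lambda>h'. \<Sum>t\<in>{Suc k..<N}. Mt t h') (h @ [(j, l)])"
          unfolding F_eq
          by (rule hist_add[OF m1 Mt_meas Mt_single_b[OF kN] Msum_b g' len'])
        also have "HE n (Mt k) (h @ [(j, l)]) = Mt k (h @ [(j, l)])"
          by (rule hist_const) (simp add: Mt_const k_def del: append_assoc add: append_assoc[symmetric])
        also have "HE n (\<lambda>h'. \<Sum>t\<in>{Suc k..<N}. Mt t h') (h @ [(j, l)]) = 0"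
          using Suc.IH[OF g' len'] by (simp add: k_def)
        also have "Mt k (h @ [(j, l)]) = c - l * ((x j - y j) / x j)"
          using Mt_snoc[of h k j l] by (simp add: k_def c_def x_def)
        finally show "HE n (\<lambda>h'. \<Sum>t\<in>{k..<N}. Mt t h') (h @ [(j, l)]) = c - l * ((x j - y j) / x j)" by simp
      qed
    qed
    also have "\<dots> = c - \<mu> j * ((x j - y j) / x j)"
    proof -
      interpret prob_space "P j" by (rule P_prob)
      have "(\<integral>l. c - l * ((x j - y j) / x j) \<partial>P j) = (\<integral>l. c \<partial>P j) - (\<integral>l. l * ((x j - y j) / x j) \<partial>P j)"
      proof (rule Bochner_Integration.integral_diff)
        show "integrable (P j) (\<lambda>l. c)" by simp
        show "integrable (P j) (\<lambda>l. l * ((x j - y j) / x j))"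
          by (rule integrable_mult_left) (rule id_integrable)
      qed
      then show ?thesis by (simp add: prob_space mu_def)
    qed
    finally show ?thesis .
  qed
  have "HE (Suc n) (\<lambda>h'. \<Sum>t\<in>{length h..<N}. Mt t h') h = (\<Sum>j\<in>UNIV. x j * (c - \<mu> j * ((x j - y j) / x j)))"
    by (simp add: k_def[symmetric] int_eq x_def)
  also have "\<dots> = c * (\<Sum>j\<in>UNIV. x j) - (\<Sum>j\<in>UNIV. \<mu> j * (x j - y j))"
  proof -
    have "x j * (c - \<mu> j * ((x j - y j) / x j)) = c * x j - \<mu> j * (x j - y j)" for j
      using xp[of j] by (simp add: field_simps)
    then show ?thesis by (simp add: sum_subtractf sum_distrib_left)
  qed
  also have "\<dots> = 0" using xof_in by (simp add: x_def c_def inner_vec_def trunc_simplex_def)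
  finally show ?case .
qed

end

context alg
begin

lemma inner_b:
  assumes "\<And>i. \<bar>u i\<bar> \<le> c"
  shows "\<bar>inner_vec u (\<lambda>i. X h t i - y i)\<bar> \<le> real CARD('k) * c"
proof -
  have "\<bar>u i * (X h t i - y i)\<bar> \<le> c * 1" for i
    by (rule abs_mult_bound[OF assms]) (use xr_b[of h t i] y_b[of i] in \<open>simp add: abs_le_iff\<close>)
  then have "\<bar>\<Sum>i\<in>UNIV. u i * (X h t i - y i)\<bar> \<le> real (card (UNIV::'k set)) * (c * 1)"
    by (intro abs_sum_bound) simp_all
  then show ?thesis by (simp add: inner_vec_def)
qed

lemma avg_b:
  assumes T: "0 < T" and b: "\<And>t. t < T \<Longrightarrow> \<bar>g t\<bar> \<le> (c::real)"
  shows "\<bar>(1 / real T) * (\<Sum>t<T. g t)\<bar> \<le> c"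
proof -
  have "\<bar>\<Sum>t<T. g t\<bar> \<le> real (card {..<T}) * c" by (rule abs_sum_bound) (use b in auto)
  then show ?thesis using T by (simp add: abs_mult field_simps)
qed

lemma fobj_b:
  assumes "\<And>i. \<epsilon> \<le> x i" "\<And>i. x i \<le> 1"
  shows "\<bar>f_obj \<mu> lam \<epsilon> x\<bar> \<le> real CARD('k) + lam * (real CARD('k) * (- ln \<epsilon>) + real CARD('k) * (1 / \<epsilon>))"
proof -
  have xp: "0 < x i" for i using assms(1)[of i] e0 by simp
  have e1': "\<epsilon> \<le> 1" using assms(1,2) by (meson order_trans)
  have b1: "\<bar>\<Sum>i\<in>UNIV. \<mu> i * x i\<bar> \<le> real (card (UNIV::'k set)) * 1"
  proof (rule abs_sum_bound)
    fix i
    have "\<mu> i * x i \<le> 1" by (rule mult_le_one) (use mu_b[of i] xp[of i] assms(2)[of i] in auto)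
    moreover have "0 \<le> \<mu> i * x i" using mu_b[of i] xp[of i] by simp
    ultimately show "\<bar>\<mu> i * x i\<bar> \<le> 1" by simp
  qed simp
  have b2: "\<bar>\<Sum>i\<in>UNIV. ln (x i)\<bar> \<le> real (card (UNIV::'k set)) * (- ln \<epsilon>)"
  proof (rule abs_sum_bound)
    fix i
    have "ln \<epsilon> \<le> ln (x i)" using assms(1)[of i] e0 by simp
    moreover have "ln (x i) \<le> 0" using assms(2)[of i] xp[of i] by simp
    ultimately show "\<bar>ln (x i)\<bar> \<le> - ln \<epsilon>" by simp
  qed simp
  have b3: "\<bar>(1 / \<epsilon>) * (\<Sum>i\<in>UNIV. x i)\<bar> \<le> real (card (UNIV::'k set)) * (1 / \<epsilon>)"
  proof -
    have "\<bar>\<Sum>i\<in>UNIV. x i\<bar> \<le> real (card (UNIV::'k set)) * 1"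
    proof (rule abs_sum_bound)
      fix i show "\<bar>x i\<bar> \<le> 1" using xp[of i] assms(2)[of i] by simp
    qed simp
    then show ?thesis using e0 by (simp add: abs_mult field_simps)
  qed
  have "\<bar>R_eps \<epsilon> x\<bar> \<le> real CARD('k) * (- ln \<epsilon>) + real CARD('k) * (1 / \<epsilon>)"
    using b2 b3 unfolding R_eps_def by linarith
  then have "\<bar>lam * R_eps \<epsilon> x\<bar> \<le> lam * (real CARD('k) * (- ln \<epsilon>) + real CARD('k) * (1 / \<epsilon>))"
    using lam by (simp add: abs_mult)
  then show ?thesis using b1 unfolding f_obj_def inner_vec_def by linarith
qed

theorem main:
  assumes T: "0 < T"
  shows "hist_exp P (x_of \<alpha> \<eta> lam \<epsilon>) T
       (\<lambda>h. f_obj \<mu> lam \<epsilon> (\<lambda>i. (1 / real T) * (\<Sum>t<T. x_round \<alpha> \<eta> lam \<epsilon> h t i))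
            - f_obj \<mu> lam \<epsilon> y) []
     \<le> hist_exp P (x_of \<alpha> \<eta> lam \<epsilon>) T
       (\<lambda>h. bregman \<alpha> y (x_round \<alpha> \<eta> lam \<epsilon> h 0) / (\<eta> * real T)
            + (\<eta> / real T) * (\<Sum>t<T. local_norm_sq \<alpha> (x_round \<alpha> \<eta> lam \<epsilon> h t) (lhat_round \<alpha> \<eta> lam \<epsilon> h t))
            + (\<eta> * lam\<^sup>2 / real T) * (\<Sum>t<T. local_norm_sq \<alpha> (x_round \<alpha> \<eta> lam \<epsilon> h t)
                                              (grad_R_eps \<epsilon> (x_round \<alpha> \<eta> lam \<epsilon> h t)))) []"
proof -
  define L where "L = (\<lambda>h. f_obj \<mu> lam \<epsilon> (\<lambda>i. (1 / real T) * (\<Sum>t<T. X h t i)) - f_obj \<mu> lam \<epsilon> y)"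
  define R where "R = (\<lambda>h. bregman \<alpha> y (X h 0) / (\<eta> * real T)
            + (\<eta> / real T) * (\<Sum>t<T. local_norm_sq \<alpha> (X h t) (Lh h t))
            + (\<eta> * lam\<^sup>2 / real T) * (\<Sum>t<T. local_norm_sq \<alpha> (X h t) (grad_R_eps \<epsilon> (X h t))))"
  define A where "A = (\<lambda>h. (1 / real T) * (\<Sum>t<T. inner_vec (\<lambda>i. \<mu> i + lam * grad_R_eps \<epsilon> (X h t) i) (\<lambda>i. X h t i - y i)))"
  define B where "B = (\<lambda>h. (1 / real T) * (\<Sum>t<T. inner_vec (\<lambda>i. Lh h t i + lam * grad_R_eps \<epsilon> (X h t) i) (\<lambda>i. X h t i - y i)))"
  define M where "M = (\<lambda>h. \<Sum>t\<in>{0..<T}. Mt t h)"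
  have mL: "meas_all L" unfolding meas_all_def L_def f_obj_def inner_vec_def R_eps_def
    by (intro allI) measurable
  have mR: "meas_all R" unfolding meas_all_def R_def bregman_def mirror_phi_def grad_phi_def inner_vec_def
      local_norm_sq_def grad_R_eps_def
    by (intro allI) measurable
  have mA: "meas_all A" unfolding meas_all_def A_def inner_vec_def grad_R_eps_def
    by (intro allI) measurable
  have mB: "meas_all B" unfolding meas_all_def B_def inner_vec_def grad_R_eps_def
    by (intro allI) measurable
  have mM: "meas_all M" unfolding M_def by (rule Mt_meas)
  have mM': "meas_all (\<lambda>h. (1 / real T) * M h)" by (rule meas_all_mult[OF mM])
  have bL: "bndN T L"
  proof -
    define C where "C = real CARD('k) + lam * (real CARD('k) * (- ln \<epsilon>) + real CARD('k) * (1 / \<epsilon>))"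
    have avg: "\<epsilon> \<le> (1 / real T) * (\<Sum>t<T. X h t i)" "(1 / real T) * (\<Sum>t<T. X h t i) \<le> 1" for h i
    proof -
      have "(\<Sum>t<T. \<epsilon>) \<le> (\<Sum>t<T. X h t i)" by (rule sum_mono) (rule xr_b)
      then show "\<epsilon> \<le> (1 / real T) * (\<Sum>t<T. X h t i)" using T by (simp add: field_simps)
      have "(\<Sum>t<T. X h t i) \<le> (\<Sum>t<(T::nat). 1)" by (rule sum_mono) (rule xr_b)
      then show "(1 / real T) * (\<Sum>t<T. X h t i) \<le> 1" using T by (simp add: field_simps)
    qed
    have "\<bar>L h\<bar> \<le> C + C" for h
    proof -
      have "\<bar>f_obj \<mu> lam \<epsilon> (\<lambda>i. (1 / real T) * (\<Sum>t<T. X h t i))\<bar> \<le> C"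
        unfolding C_def by (rule fobj_b) (rule avg)+
      moreover have "\<bar>f_obj \<mu> lam \<epsilon> y\<bar> \<le> C" unfolding C_def by (rule fobj_b) (rule y_b)+
      ultimately show ?thesis unfolding L_def by linarith
    qed
    moreover have "0 \<le> C + C" using calculation[of "[]"] by linarith
    ultimately show ?thesis unfolding bndN_def by blast
  qed
  have bA: "bndN T A"
  proof -
    have "\<bar>A h\<bar> \<le> real CARD('k) * (1 + lam * (1 / \<epsilon>))" for h
      unfolding A_def
    proof (rule avg_b[OF T])
      fix t
      have "\<bar>\<mu> i + lam * grad_R_eps \<epsilon> (X h t) i\<bar> \<le> 1 + lam * (1 / \<epsilon>)" for i
      proof -
        have "lam * grad_R_eps \<epsilon> (X h t) i \<le> lam * (1 / \<epsilon>)" using gR_b[of h t i] lam by (intro mult_left_mono) auto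
        moreover have "0 \<le> lam * grad_R_eps \<epsilon> (X h t) i" using gR_b[of h t i] lam by simp
        ultimately show ?thesis using mu_b[of i] by (simp only: abs_le_iff) linarith
      qed
      then show "\<bar>inner_vec (\<lambda>i. \<mu> i + lam * grad_R_eps \<epsilon> (X h t) i) (\<lambda>i. X h t i - y i)\<bar>
          \<le> real CARD('k) * (1 + lam * (1 / \<epsilon>))" by (rule inner_b)
    qed
    moreover have "0 \<le> real CARD('k) * (1 + lam * (1 / \<epsilon>))" using lam e0 by simp
    ultimately show ?thesis unfolding bndN_def by blast
  qed
  have bB: "bndN T B"
  proof -
    have "\<bar>B h\<bar> \<le> real CARD('k) * (1 / \<epsilon> + lam * (1 / \<epsilon>))" if h: "goodh h" "length h = T" for h
      unfolding B_def
    proof (rule avg_b[OF T])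
      fix t assume t: "t < T"
      have "\<bar>Lh h t i + lam * grad_R_eps \<epsilon> (X h t) i\<bar> \<le> 1 / \<epsilon> + lam * (1 / \<epsilon>)" for i
      proof -
        have "lam * grad_R_eps \<epsilon> (X h t) i \<le> lam * (1 / \<epsilon>)" using gR_b[of h t i] lam by (intro mult_left_mono) auto
        moreover have "0 \<le> lam * grad_R_eps \<epsilon> (X h t) i" using gR_b[of h t i] lam by simp
        moreover have "0 \<le> Lh h t i" "Lh h t i \<le> 1 / \<epsilon>" using lh_b[of h t i] h t by auto
        ultimately show ?thesis by (simp only: abs_le_iff) linarith
      qed
      then show "\<bar>inner_vec (\<lambda>i. Lh h t i + lam * grad_R_eps \<epsilon> (X h t) i) (\<lambda>i. X h t i - y i)\<bar>
          \<le> real CARD('k) * (1 / \<epsilon> + lam * (1 / \<epsilon>))" by (rule inner_b)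
    qed
    moreover have "0 \<le> real CARD('k) * (1 / \<epsilon> + lam * (1 / \<epsilon>))" using lam e0 by simp
    ultimately show ?thesis unfolding bndN_def by blast
  qed
  have bM: "bndN T M" unfolding M_def by (rule Msum_b)
  have bM': "bndN T (\<lambda>h. (1 / real T) * M h)"
  proof -
    obtain C where C: "0 \<le> C" "\<And>h. goodh h \<and> length h = T \<longrightarrow> \<bar>M h\<bar> \<le> C" using bM unfolding bndN_def by blast
    have "\<bar>(1 / real T) * M h\<bar> \<le> C" if "goodh h \<and> length h = T" for h
    proof -
      have "\<bar>(1 / real T) * M h\<bar> = (1 / real T) * \<bar>M h\<bar>" using T by (simp add: abs_mult)
      also have "\<dots> \<le> 1 * C" using C that T by (intro mult_mono) auto
      finally show ?thesis by simp
    qed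
    then show ?thesis using C(1) unfolding bndN_def by blast
  qed
  have bR: "bndN T R"
  proof -
    define C0 where "C0 = \<bar>bregman \<alpha> y (x_of \<alpha> \<eta> lam \<epsilon> []) / (\<eta> * real T)\<bar>"
    define C1 where "C1 = real CARD('k) * (1 / \<epsilon>)^2"
    have nb: "\<bar>local_norm_sq \<alpha> (X h t) v\<bar> \<le> C1" if v: "\<And>i. 0 \<le> v i \<and> v i \<le> 1 / \<epsilon>" for h t v
    proof -
      have "\<bar>(v i)\<^sup>2 * X h t i powr (2 - \<alpha>)\<bar> \<le> (1 / \<epsilon>)^2 * 1" for i
      proof (rule abs_mult_bound)
        show "\<bar>(v i)\<^sup>2\<bar> \<le> (1 / \<epsilon>)^2" using v[of i] by (simp add: power_mono)
        have "X h t i powr (2 - \<alpha>) \<le> 1 powr (2 - \<alpha>)" by (rule powr_mono2) (use a1 xr_b[of h t i] in auto)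
        then show "\<bar>X h t i powr (2 - \<alpha>)\<bar> \<le> 1" by simp
      qed
      then have "\<bar>\<Sum>i\<in>UNIV. (v i)\<^sup>2 * X h t i powr (2 - \<alpha>)\<bar> \<le> real (card (UNIV::'k set)) * ((1 / \<epsilon>)^2 * 1)"
        by (intro abs_sum_bound) simp_all
      then show ?thesis by (simp add: local_norm_sq_def C1_def)
    qed
    have "\<bar>R h\<bar> \<le> C0 + \<eta> * C1 + \<eta> * lam\<^sup>2 * C1" if h: "goodh h" "length h = T" for h
    proof -
      have r1: "\<bar>bregman \<alpha> y (X h 0) / (\<eta> * real T)\<bar> \<le> C0" by (simp add: C0_def x_round_def)
      have r2: "\<bar>(\<eta> / real T) * (\<Sum>t<T. local_norm_sq \<alpha> (X h t) (Lh h t))\<bar> \<le> \<eta> * C1"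
      proof -
        have a: "\<bar>(1 / real T) * (\<Sum>t<T. local_norm_sq \<alpha> (X h t) (Lh h t))\<bar> \<le> C1"
          by (rule avg_b[OF T], rule nb) (use lh_b h in auto)
        have eq: "\<bar>(\<eta> / real T) * (\<Sum>t<T. local_norm_sq \<alpha> (X h t) (Lh h t))\<bar>
            = \<eta> * \<bar>(1 / real T) * (\<Sum>t<T. local_norm_sq \<alpha> (X h t) (Lh h t))\<bar>"
          using eta T by (simp add: abs_mult)
        show ?thesis unfolding eq by (rule mult_left_mono[OF a]) (use eta in simp)
      qed
      have r3: "\<bar>(\<eta> * lam\<^sup>2 / real T) * (\<Sum>t<T. local_norm_sq \<alpha> (X h t) (grad_R_eps \<epsilon> (X h t)))\<bar> \<le> \<eta> * lam\<^sup>2 * C1"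
      proof -
        have a: "\<bar>(1 / real T) * (\<Sum>t<T. local_norm_sq \<alpha> (X h t) (grad_R_eps \<epsilon> (X h t)))\<bar> \<le> C1"
          by (rule avg_b[OF T], rule nb) (use gR_b in auto)
        have eq: "\<bar>(\<eta> * lam\<^sup>2 / real T) * (\<Sum>t<T. local_norm_sq \<alpha> (X h t) (grad_R_eps \<epsilon> (X h t)))\<bar>
            = (\<eta> * lam\<^sup>2) * \<bar>(1 / real T) * (\<Sum>t<T. local_norm_sq \<alpha> (X h t) (grad_R_eps \<epsilon> (X h t)))\<bar>"
          using eta T by (simp add: abs_mult)
        show ?thesis unfolding eq by (rule mult_left_mono[OF a]) (use eta in simp)
      qed
      show ?thesis unfolding R_def using r1 r2 r3 by linarith
    qed
    moreover have "0 \<le> C0 + \<eta> * C1 + \<eta> * lam\<^sup>2 * C1" using eta e0 by (simp add: C0_def C1_def)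
    ultimately show ?thesis unfolding bndN_def by blast
  qed
  have LA: "L h \<le> A h" for h
    unfolding L_def A_def by (rule pathA[OF T lam]) (use xr_b y_b in auto)
  have ABM: "A = (\<lambda>h. B h + (1 / real T) * M h)"
  proof (rule ext)
    fix h
    have "inner_vec (\<lambda>i. \<mu> i + lam * grad_R_eps \<epsilon> (X h t) i) (\<lambda>i. X h t i - y i)
        = inner_vec (\<lambda>i. Lh h t i + lam * grad_R_eps \<epsilon> (X h t) i) (\<lambda>i. X h t i - y i) + Mt t h" for t
      by (simp add: inner_vec_def Mt_def sum.distrib[symmetric] algebra_simps)
    then show "A h = B h + (1 / real T) * M h"
      by (simp add: A_def B_def M_def sum.distrib distrib_left atLeast0LessThan add_divide_distrib)
  qed
  have BR: "B h \<le> R h" if "goodh h" "length h = T" for h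
  proof -
    have pb: "(\<Sum>t<T. inner_vec (\<lambda>i. Lh h t i + lam * grad_R_eps \<epsilon> (X h t) i) (\<lambda>i. X h t i - y i))
      \<le> bregman \<alpha> y (X h 0) / \<eta> + \<eta> * (\<Sum>t<T. local_norm_sq \<alpha> (X h t) (Lh h t))
        + \<eta> * lam^2 * (\<Sum>t<T. local_norm_sq \<alpha> (X h t) (grad_R_eps \<epsilon> (X h t)))"
      by (rule pathB[OF a0 a1 e0 e1 lam eta y that])
    have "B h \<le> (1 / real T) * (bregman \<alpha> y (X h 0) / \<eta> + \<eta> * (\<Sum>t<T. local_norm_sq \<alpha> (X h t) (Lh h t))
        + \<eta> * lam^2 * (\<Sum>t<T. local_norm_sq \<alpha> (X h t) (grad_R_eps \<epsilon> (X h t))))"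
      unfolding B_def by (rule mult_left_mono[OF pb]) (use T in simp)
    also have "\<dots> = R h" unfolding R_def using T eta by (simp add: field_simps)
    finally show ?thesis .
  qed
  have g0: "goodh ([] :: ('k \<times> real) list)" by (simp add: goodh_def)
  have "HE T L [] \<le> HE T A []"
    by (rule hist_mono[OF mL mA bL bA _ g0]) (use LA in auto)
  also have "HE T A [] = HE T B [] + HE T (\<lambda>h. (1 / real T) * M h) []"
    unfolding ABM by (rule hist_add[OF mB mM' bB bM' g0]) simp
  also have "HE T (\<lambda>h. (1 / real T) * M h) [] = (1 / real T) * HE T M []" by (rule hist_cmult)
  also have "HE T M [] = 0" unfolding M_def using mart[OF g0, of T T] by simp
  also have "HE T B [] \<le> HE T R []"
    by (rule hist_mono[OF mB mR bB bR _ g0]) (use BR in auto)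
  finally show ?thesis unfolding L_def R_def by simp
qed

end

theorem lemma5:
  fixes P :: "'k::finite \<Rightarrow> real measure"
    and \<alpha> \<eta> lam \<epsilon> :: real and T :: nat and y :: "'k \<Rightarrow> real"
  assumes P_prob: "\<And>a. prob_space (P a)"
    and P_sets: "\<And>a. sets (P a) = sets borel"
    and P_supp: "\<And>a. AE l in P a. l \<in> {0..1}"
    and alpha: "0 \<le> \<alpha>" "\<alpha> \<le> 1"
    and eta: "\<eta> > 0" and lam: "lam > 0"
    and eps: "\<epsilon> > 0" "real CARD('k) * \<epsilon> \<le> 1"
    and T: "T > 0"
    and y: "y \<in> trunc_simplex \<epsilon>"
  defines "\<mu> \<equiv> (\<lambda>a. \<integral>l. l \<partial>(P a))"
  shows
    "hist_exp P (x_of \<alpha> \<eta> lam \<epsilon>) T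
       (\<lambda>h. f_obj \<mu> lam \<epsilon> (\<lambda>i. (1 / real T) * (\<Sum>t<T. x_round \<alpha> \<eta> lam \<epsilon> h t i))
            - f_obj \<mu> lam \<epsilon> y) []
     \<le> hist_exp P (x_of \<alpha> \<eta> lam \<epsilon>) T
       (\<lambda>h. bregman \<alpha> y (x_round \<alpha> \<eta> lam \<epsilon> h 0) / (\<eta> * real T)
            + (\<eta> / real T) * (\<Sum>t<T. local_norm_sq \<alpha> (x_round \<alpha> \<eta> lam \<epsilon> h t) (lhat_round \<alpha> \<eta> lam \<epsilon> h t))
            + (\<eta> * lam\<^sup>2 / real T) * (\<Sum>t<T. local_norm_sq \<alpha> (x_round \<alpha> \<eta> lam \<epsilon> h t)
                                              (grad_R_eps \<epsilon> (x_round \<alpha> \<eta> lam \<epsilon> h t)))) []"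
proof -
  interpret alg P \<alpha> \<eta> lam \<epsilon> y \<mu>
  proof (rule alg.intro)
    show "\<And>a. prob_space (P a)" by (rule P_prob)
    show "\<And>a. sets (P a) = sets borel" by (rule P_sets)
    show "\<And>a. AE l in P a. l \<in> {0..1}" by (rule P_supp)
    show "0 \<le> \<alpha>" "\<alpha> \<le> 1" by (rule alpha(1), rule alpha(2))
    show "0 < \<eta>" by (rule eta)
    show "0 < lam" by (rule lam)
    show "0 < \<epsilon>" by (rule eps(1))
    show "real CARD('k) * \<epsilon> \<le> 1" by (rule eps(2))
    show "y \<in> trunc_simplex \<epsilon>" by (rule y)
    show "\<mu> = (\<lambda>a. \<integral>l. l \<partial>P a)" by (simp add: \<mu>_def)
  qed
  show ?thesis by (rule main[OF T])
qed

end
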